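(* Consider a finite-horizon RMAB as in the context and let $\tilde V(\cdot,h):=\tilde V^N_{\tilde\pi^{N,*}}(\cdot,h)$ be the value function of the locally-SP-optimal policy in the Gaussian stochastic system. For all $1\le h\le H$ and all $\mathbf{x},\mathbf{x}'\in\mathcal{X}_{z_h\delta_N}$, \[ |\tilde V(\mathbf{x},h)-\tilde V(\mathbf{x}',h)|\le u_h\|\mathbf{x}-\mathbf{x}'\|_\infty+\mathcal{O}\big(N^{-\log N}\big), \] where $u_H=2r_{\max}S(S+1)$ and, for $H-1\ge h\ge1$, $u_h=2r_{\max}S(S+1)+\sqrt S\,u_{h+1}L_h(S+1)$.
   Context: RMAB: states $\mathcal{S}=\{1,\dots,S\}$, actions $\{0,1\}$ (so the number of actions is $2$), horizon $H$; kernels $\mathbf{P}_h(\cdot\mid s,a)$, rewards $r_h(s,a)\ge0$, $r_{\max}=\max r_h(s,a)$, $\mathbf{r}_h\in\mathbb{R}^{2S}$; budget $\alpha\in(0,1)$, $\alpha N\in\mathbb{N}$. States are fractions $\mathbf{x}\in\Delta^S$ of arms per state, actions $\mathbf{y}\in\Delta^{2S}$ fractions per state-action; $\mathcal{Y}_{\mathbf{x}}=\{\mathbf{y}\in\Delta^{2S}:\mathbf{y}(\cdot,0)+\mathbf{y}(\cdot,1)=\mathbf{x},\sum_sy(s,1)=\alpha\}$. Fluid LP: maximize $\sum_h\mathbf{r}_h\mathbf{y}_h^\top$ s.t. $\sum_sy_h(s,1)=\alpha$, $\mathbf{y}_h(\cdot,0)+\mathbf{y}_h(\cdot,1)=\mathbf{x}_h$,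 $\mathbf{y}_h\ge0$, $\mathbf{x}_1=\mathbf{x}_{\mathrm{ini}}$, $\mathbf{x}_{h+1}=\phi_h(\mathbf{y}_h)$, $\phi_h(\mathbf{y})(s')=\sum_{s,a}y(s,a)\mathbf{P}_h(s'\mid s,a)$; $(\mathbf{x}^*,\mathbf{y}^* )$ an optimal solution; $\sigma:=\inf_{\mathbf{y}\in\mathcal{U},\mathbf{y}\ne\mathbf{y}^*}\mathbf{r}(\mathbf{y}^*-\mathbf{y})^\top/\|\mathbf{y}^*-\mathbf{y}\|_\infty$ ($\mathcal{U}$ the LP feasible set, $\mathbf{r}=(\mathbf{r}_1,\dots,\mathbf{r}_H)$). Constants: $\delta_N=2\log N/\sqrt N$, $L_h$ the $\|\cdot\|_\infty$-Lipschitz constant of $\phi_h$, $\kappa=\max\{2+6S,3+2r_{\max}HS/\sigma\}$, $z_1=1$, $z_{h+1}=\sqrt S(\kappa L_hz_h+1)$. $\mathcal{X}_{z_h\delta_N}=\{\mathbf{x}\in\Delta^S:\|\mathbf{x}-\mathbf{x}^*_h\|_\infty\le z_h\delta_N\}$. $\Pi_{\delta_N}(\mathbf{y}^* )$: policies with $\|\pi(\mathbf{x},h)-\mathbf{y}^*_h\|_\infty\le\kappa z_h\delta_N$ whenever $\|\mathbf{x}-\mathbf{x}^*_h\|_\infty\le z_h\delta_N$, and equal to a fixed predefined policy otherwise. Gaussian stochastic system: state space $\Delta^S$; under action $\mathbf{y}_h\in\mathcal{Y}_{\tilde{\mathbf{X}}_h}$, $\tilde{\mathbf{X}}_{h+1}=\mathrm{Proj}_{\Delta^S}(\phi_h(\mathbf{y}_h)+\mathbf{Z}_h/\sqrt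 N)$ (Euclidean projection), $\mathbf{Z}_h\sim\mathcal{N}(\mathbf{0},\Gamma_h(\mathbf{y}^*_h))$ independent across $h$, $\Gamma_h(\mathbf{y}^*_h)=\sum_{s,a}y^*_h(s,a)\Sigma_h(s,a)$, $\Sigma_h(s,a)_{ij}=\mathbf{P}_h(i\mid s,a)(\mathbf{1}[i=j]-\mathbf{P}_h(j\mid s,a))$. $\tilde V^N_\pi(\mathbf{x},h)=\sum_{h'\ge h}\mathbb{E}[\mathbf{r}_{h'}\tilde{\mathbf{Y}}_{h'}^\top\mid\tilde{\mathbf{X}}_h=\mathbf{x}]$. Locally-SP-optimal policy $\tilde\pi^{N,*}\in\arg\max_{\pi\in\Pi_{\delta_N}(\mathbf{y}^* )}\tilde V^N_\pi$. The $\mathcal{O}(N^{-\log N})$ term has constants independent of $N$, $\mathbf{x},\mathbf{x}'$. *)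

theory Defs
  imports "HOL-Analysis.Analysis" "HOL-Probability.Probability"
begin

(* States: finite type 's (S = CARD('s)); actions: bool (False = 0, True = 1).
   State-action vectors live in real^('s \<times> bool). Time steps h \<in> {1..H}. *)

definition Delta :: "(real^'n::finite) set" where
  "Delta = {x. (\<forall>i. 0 \<le> x$i) \<and> (\<Sum>i\<in>UNIV. x$i) = 1}"

definition Yset :: "real \<Rightarrow> real^'s::finite \<Rightarrow> (real^('s \<times> bool)) set" where
  "Yset \<alpha> x = {y \<in> Delta. (\<forall>s. y$(s,False) + y$(s,True) = x$s) \<and> (\<Sum>s\<in>UNIV. y$(s,True)) = \<alpha>}"

(* P h s a s' = P_h(s' | s, a) *)
definition phi :: "(nat \<Rightarrow> 's::finite \<Rightarrow> bool \<Rightarrow> 's \<Rightarrow> real) \<Rightarrow> nat \<Rightarrow> real^('s \<times> bool) \<Rightarrow> real^'s" where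
  "phi P h y = (\<chi> s'. \<Sum>sa\<in>UNIV. y$sa * P h (fst sa) (snd sa) s')"

definition reward :: "(nat \<Rightarrow> 's::finite \<Rightarrow> bool \<Rightarrow> real) \<Rightarrow> nat \<Rightarrow> real^('s \<times> bool) \<Rightarrow> real" where
  "reward r h y = (\<Sum>sa\<in>UNIV. r h (fst sa) (snd sa) * y$sa)"

definition rmax :: "nat \<Rightarrow> (nat \<Rightarrow> 's::finite \<Rightarrow> bool \<Rightarrow> real) \<Rightarrow> real" where
  "rmax H r = Max ((\<lambda>(h,s,a). r h s a) ` ({1..H} \<times> UNIV \<times> UNIV))"

definition lp_feasible :: "nat \<Rightarrow> real \<Rightarrow> (nat \<Rightarrow> 's::finite \<Rightarrow> bool \<Rightarrow> 's \<Rightarrow> real) \<Rightarrow> real^'s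
    \<Rightarrow> (nat \<Rightarrow> real^'s) \<Rightarrow> (nat \<Rightarrow> real^('s \<times> bool)) \<Rightarrow> bool" where
  "lp_feasible H \<alpha> P xini x y \<longleftrightarrow> x 1 = xini \<and>
     (\<forall>h\<in>{1..H}. y h \<in> Yset \<alpha> (x h) \<and> x (Suc h) = phi P h (y h))"

definition lp_U :: "nat \<Rightarrow> real \<Rightarrow> (nat \<Rightarrow> 's::finite \<Rightarrow> bool \<Rightarrow> 's \<Rightarrow> real) \<Rightarrow> real^'s
    \<Rightarrow> (nat \<Rightarrow> real^('s \<times> bool)) set" where
  "lp_U H \<alpha> P xini = {y. (\<forall>h. h \<notin> {1..H} \<longrightarrow> y h = 0) \<and> (\<exists>x. lp_feasible H \<alpha> P xini x y)}"

definition lp_value :: "nat \<Rightarrow> (nat \<Rightarrow> 's::finite \<Rightarrow> bool \<Rightarrow> real) \<Rightarrow> (nat \<Rightarrow> real^('s \<times> bool)) \<Rightarrow> real" where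
  "lp_value H r y = (\<Sum>h=1..H. reward r h (y h))"

definition stack_norm :: "nat \<Rightarrow> (nat \<Rightarrow> real^('s::finite \<times> bool)) \<Rightarrow> real" where
  "stack_norm H y = Max ((\<lambda>h. infnorm (y h)) ` {1..H})"

definition sigma :: "nat \<Rightarrow> real \<Rightarrow> (nat \<Rightarrow> 's::finite \<Rightarrow> bool \<Rightarrow> 's \<Rightarrow> real) \<Rightarrow> real^'s
    \<Rightarrow> (nat \<Rightarrow> 's \<Rightarrow> bool \<Rightarrow> real) \<Rightarrow> (nat \<Rightarrow> real^('s \<times> bool)) \<Rightarrow> real" where
  "sigma H \<alpha> P xini r ys = Inf {lp_value H r (\<lambda>h. ys h - y h) / stack_norm H (\<lambda>h. ys h - y h) | y.
      y \<in> lp_U H \<alpha> P xini \<and> y \<noteq> ys}"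

definition lipconst :: "(nat \<Rightarrow> 's::finite \<Rightarrow> bool \<Rightarrow> 's \<Rightarrow> real) \<Rightarrow> nat \<Rightarrow> real" where
  "lipconst P h = Inf {L. 0 \<le> L \<and> (\<forall>y\<in>Delta. \<forall>y'\<in>Delta.
      infnorm (phi P h y - phi P h y') \<le> L * infnorm (y - y'))}"

definition kappa :: "nat \<Rightarrow> real \<Rightarrow> (nat \<Rightarrow> 's::finite \<Rightarrow> bool \<Rightarrow> 's \<Rightarrow> real) \<Rightarrow> real^'s
    \<Rightarrow> (nat \<Rightarrow> 's \<Rightarrow> bool \<Rightarrow> real) \<Rightarrow> (nat \<Rightarrow> real^('s \<times> bool)) \<Rightarrow> real" where
  "kappa H \<alpha> P xini r ys = max (2 + 6 * real CARD('s))
      (3 + 2 * rmax H r * real H * real CARD('s) / sigma H \<alpha> P xini r ys)"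

(* zaux S k L n = z_{n+1} *)
primrec zaux :: "real \<Rightarrow> real \<Rightarrow> (nat \<Rightarrow> real) \<Rightarrow> nat \<Rightarrow> real" where
  "zaux S k L 0 = 1"
| "zaux S k L (Suc n) = sqrt S * (k * L (Suc n) * zaux S k L n + 1)"

definition zfun :: "nat \<Rightarrow> real \<Rightarrow> (nat \<Rightarrow> 's::finite \<Rightarrow> bool \<Rightarrow> 's \<Rightarrow> real) \<Rightarrow> real^'s
    \<Rightarrow> (nat \<Rightarrow> 's \<Rightarrow> bool \<Rightarrow> real) \<Rightarrow> (nat \<Rightarrow> real^('s \<times> bool)) \<Rightarrow> nat \<Rightarrow> real" where
  "zfun H \<alpha> P xini r ys h = zaux (real CARD('s)) (kappa H \<alpha> P xini r ys) (lipconst P) (h - 1)"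

(* uaux c S L H k = u_{H-k} *)
primrec uaux :: "real \<Rightarrow> real \<Rightarrow> (nat \<Rightarrow> real) \<Rightarrow> nat \<Rightarrow> nat \<Rightarrow> real" where
  "uaux c S L H 0 = c"
| "uaux c S L H (Suc k) = c + sqrt S * uaux c S L H k * L (H - Suc k) * (S + 1)"

definition ufun :: "nat \<Rightarrow> (nat \<Rightarrow> 's::finite \<Rightarrow> bool \<Rightarrow> 's \<Rightarrow> real) \<Rightarrow> (nat \<Rightarrow> 's \<Rightarrow> bool \<Rightarrow> real) \<Rightarrow> nat \<Rightarrow> real" where
  "ufun H P r h = uaux (2 * rmax H r * real CARD('s) * (real CARD('s) + 1)) (real CARD('s))
      (lipconst P) H (H - h)"

definition deltaN :: "nat \<Rightarrow> real" where
  "deltaN N = 2 * ln (real N) / sqrt (real N)"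

definition Gamma :: "(nat \<Rightarrow> 's::finite \<Rightarrow> bool \<Rightarrow> 's \<Rightarrow> real) \<Rightarrow> nat \<Rightarrow> real^('s \<times> bool) \<Rightarrow> real^'s^'s" where
  "Gamma P h y = (\<chi> i j. \<Sum>sa\<in>UNIV. y$sa *
      (P h (fst sa) (snd sa) i * ((if i = j then 1 else 0) - P h (fst sa) (snd sa) j)))"

definition std_gauss :: "(real^'n::finite) measure" where
  "std_gauss = density lborel (\<lambda>x. ennreal (\<Prod>i\<in>UNIV. std_normal_density (x$i)))"

(* N(0, G): law of A w with w standard Gaussian and A A^T = G *)
definition gauss_cov :: "real^'n^'n::finite \<Rightarrow> (real^'n) measure" where
  "gauss_cov G = distr std_gauss borel (\<lambda>w. (SOME A :: real^'n^'n. A ** transpose A = G) *v w)"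

definition next_state :: "nat \<Rightarrow> (nat \<Rightarrow> 's::finite \<Rightarrow> bool \<Rightarrow> 's \<Rightarrow> real) \<Rightarrow> nat
    \<Rightarrow> real^('s \<times> bool) \<Rightarrow> real^'s \<Rightarrow> real^'s" where
  "next_state N P h y z = closest_point Delta (phi P h y + (1 / sqrt (real N)) *\<^sub>R z)"

(* Vaux ... k x = value with k steps remaining, i.e. at time h = H + 1 - k *)
fun Vaux :: "nat \<Rightarrow> nat \<Rightarrow> (nat \<Rightarrow> 's::finite \<Rightarrow> bool \<Rightarrow> 's \<Rightarrow> real) \<Rightarrow> (nat \<Rightarrow> 's \<Rightarrow> bool \<Rightarrow> real)
    \<Rightarrow> (nat \<Rightarrow> real^('s \<times> bool)) \<Rightarrow> (real^'s \<Rightarrow> nat \<Rightarrow> real^('s \<times> bool)) \<Rightarrow> nat \<Rightarrow> real^'s \<Rightarrow> real" where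
  "Vaux H N P r ys \<pi> 0 x = 0"
| "Vaux H N P r ys \<pi> (Suc k) x =
     (let h = H - k; y = \<pi> x h in
      reward r h y + (\<integral>z. Vaux H N P r ys \<pi> k (next_state N P h y z) \<partial>(gauss_cov (Gamma P h (ys h)))))"

definition Vtil :: "nat \<Rightarrow> nat \<Rightarrow> (nat \<Rightarrow> 's::finite \<Rightarrow> bool \<Rightarrow> 's \<Rightarrow> real) \<Rightarrow> (nat \<Rightarrow> 's \<Rightarrow> bool \<Rightarrow> real)
    \<Rightarrow> (nat \<Rightarrow> real^('s \<times> bool)) \<Rightarrow> (real^'s \<Rightarrow> nat \<Rightarrow> real^('s \<times> bool)) \<Rightarrow> nat \<Rightarrow> real^'s \<Rightarrow> real" where
  "Vtil H N P r ys \<pi> h x = Vaux H N P r ys \<pi> (Suc H - h) x"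

definition policy_valid :: "nat \<Rightarrow> real \<Rightarrow> (real^'s::finite \<Rightarrow> nat \<Rightarrow> real^('s \<times> bool)) \<Rightarrow> bool" where
  "policy_valid H \<alpha> \<pi> \<longleftrightarrow> (\<forall>h\<in>{1..H}. \<forall>x\<in>Delta. \<pi> x h \<in> Yset \<alpha> x) \<and>
     (\<forall>h. (\<lambda>x. \<pi> x h) \<in> borel_measurable borel)"

definition Pi_loc :: "nat \<Rightarrow> real \<Rightarrow> real \<Rightarrow> (nat \<Rightarrow> real) \<Rightarrow> real \<Rightarrow> (nat \<Rightarrow> real^'s::finite)
    \<Rightarrow> (nat \<Rightarrow> real^('s \<times> bool)) \<Rightarrow> (real^'s \<Rightarrow> nat \<Rightarrow> real^('s \<times> bool))
    \<Rightarrow> (real^'s \<Rightarrow> nat \<Rightarrow> real^('s \<times> bool)) set" where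
  "Pi_loc H \<alpha> k z \<delta> xs ys \<pi>0 = {\<pi>. policy_valid H \<alpha> \<pi> \<and>
     (\<forall>h\<in>{1..H}. \<forall>x\<in>Delta.
        (infnorm (x - xs h) \<le> z h * \<delta> \<longrightarrow> infnorm (\<pi> x h - ys h) \<le> k * z h * \<delta>) \<and>
        (\<not> infnorm (x - xs h) \<le> z h * \<delta> \<longrightarrow> \<pi> x h = \<pi>0 x h))}"

definition Pi_N :: "nat \<Rightarrow> real \<Rightarrow> (nat \<Rightarrow> 's::finite \<Rightarrow> bool \<Rightarrow> 's \<Rightarrow> real) \<Rightarrow> (nat \<Rightarrow> 's \<Rightarrow> bool \<Rightarrow> real)
    \<Rightarrow> real^'s \<Rightarrow> (nat \<Rightarrow> real^'s) \<Rightarrow> (nat \<Rightarrow> real^('s \<times> bool))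
    \<Rightarrow> (real^'s \<Rightarrow> nat \<Rightarrow> real^('s \<times> bool)) \<Rightarrow> nat \<Rightarrow> (real^'s \<Rightarrow> nat \<Rightarrow> real^('s \<times> bool)) set" where
  "Pi_N H \<alpha> P r xini xs ys \<pi>0 N =
     Pi_loc H \<alpha> (kappa H \<alpha> P xini r ys) (zfun H \<alpha> P xini r ys) (deltaN N) xs ys \<pi>0"

definition locally_SP_optimal :: "nat \<Rightarrow> real \<Rightarrow> (nat \<Rightarrow> 's::finite \<Rightarrow> bool \<Rightarrow> 's \<Rightarrow> real) \<Rightarrow> (nat \<Rightarrow> 's \<Rightarrow> bool \<Rightarrow> real)
    \<Rightarrow> real^'s \<Rightarrow> (nat \<Rightarrow> real^'s) \<Rightarrow> (nat \<Rightarrow> real^('s \<times> bool))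
    \<Rightarrow> (real^'s \<Rightarrow> nat \<Rightarrow> real^('s \<times> bool)) \<Rightarrow> nat \<Rightarrow> (real^'s \<Rightarrow> nat \<Rightarrow> real^('s \<times> bool)) \<Rightarrow> bool" where
  "locally_SP_optimal H \<alpha> P r xini xs ys \<pi>0 N \<pi> \<longleftrightarrow>
     \<pi> \<in> Pi_N H \<alpha> P r xini xs ys \<pi>0 N \<and>
     (\<forall>\<pi>'\<in>Pi_N H \<alpha> P r xini xs ys \<pi>0 N. \<forall>h\<in>{1..H}. \<forall>x\<in>Delta.
        Vtil H N P r ys \<pi>' h x \<le> Vtil H N P r ys \<pi> h x)"

end

theory Submission
  imports Defs
begin


lemma Basis_vec_real: "(Basis :: (real^'n::finite) set) = range (\<lambda>i. axis i 1)"
  unfolding Basis_vec_def by auto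

lemma prod_Basis_vec:
  fixes x :: "real^'n::finite"
  shows "(\<Prod>b\<in>Basis. f (x \<bullet> b)) = (\<Prod>i\<in>UNIV. f (x $ i))"
proof -
  have "inj (\<lambda>i::'n. axis i (1::real))" by (auto simp: inj_def axis_eq_axis)
  then show ?thesis unfolding Basis_vec_real
    by (subst prod.reindex) (auto simp: inner_axis)
qed

lemma card_Basis_vec: "card (Basis :: (real^'n::finite) set) = CARD('n)"
  by simp

lemma nn_integral_vec_prod:
  fixes g :: "real \<Rightarrow> ennreal"
  assumes [measurable]: "g \<in> borel_measurable borel"
  shows "(\<integral>\<^sup>+x. (\<Prod>i\<in>UNIV. g (x$i)) \<partial>(lborel::(real^'n::finite) measure)) = (\<integral>\<^sup>+t. g t \<partial>lborel) ^ CARD('n)"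
proof -
  have "(\<integral>\<^sup>+x. (\<Prod>i\<in>UNIV. g (x$i)) \<partial>(lborel::(real^'n::finite) measure))
     = (\<integral>\<^sup>+x. (\<Prod>b\<in>Basis. g (x \<bullet> b)) \<partial>(lborel::(real^'n::finite) measure))"
    by (simp add: prod_Basis_vec)
  also have "\<dots> = (\<Prod>b\<in>(Basis::(real^'n) set). (\<integral>\<^sup>+t. g t \<partial>lborel))"
    by (rule nn_integral_lborel_prod) auto
  also have "\<dots> = (\<integral>\<^sup>+t. g t \<partial>lborel) ^ CARD('n)"
    by simp
  finally show ?thesis .
qed



lemma nn_std_normal: "(\<integral>\<^sup>+t. ennreal (std_normal_density t) \<partial>lborel) = 1"
  by (simp add: nn_integral_eq_integral)

lemma std_gauss_space: "emeasure (std_gauss :: (real^'n::finite) measure) (space std_gauss) = 1"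
proof -
  have "emeasure (std_gauss :: (real^'n::finite) measure) (space std_gauss)
      = (\<integral>\<^sup>+x. (\<Prod>i\<in>UNIV. ennreal (std_normal_density (x$i))) \<partial>(lborel::(real^'n) measure))"
    unfolding std_gauss_def
    by (simp add: emeasure_density prod_ennreal)
  also have "\<dots> = 1"
    by (subst nn_integral_vec_prod) (auto simp: nn_std_normal)
  finally show ?thesis .
qed

lemma prob_space_std_gauss: "prob_space (std_gauss :: (real^'n::finite) measure)"
  by (rule prob_spaceI) (rule std_gauss_space)

lemma sets_std_gauss[simp]: "sets std_gauss = sets borel"
  unfolding std_gauss_def by simp

lemma exp_moment_1d: "(\<integral>\<^sup>+t. ennreal (std_normal_density t * exp (t\<^sup>2/4)) \<partial>lborel) = ennreal (sqrt 2)"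
proof -
  have eq: "std_normal_density t * exp (t\<^sup>2/4) = sqrt 2 * normal_density 0 (sqrt 2) t" for t
  proof -
    have "exp (- t\<^sup>2 / 2) * exp (t\<^sup>2/4) = exp (- t\<^sup>2 / 4)"
      by (simp add: exp_add[symmetric])
    moreover have "sqrt (2 * pi * (sqrt 2)\<^sup>2) = sqrt 2 * sqrt (2*pi)"
      by (simp add: real_sqrt_mult)
    ultimately show ?thesis
      by (simp add: std_normal_density_def normal_density_def field_simps)
  qed
  have "(\<integral>\<^sup>+t. ennreal (std_normal_density t * exp (t\<^sup>2/4)) \<partial>lborel)
      = (\<integral>\<^sup>+t. ennreal (sqrt 2) * ennreal (normal_density 0 (sqrt 2) t) \<partial>lborel)"
    by (simp add: eq ennreal_mult)
  also have "\<dots> = ennreal (sqrt 2) * (\<integral>\<^sup>+t. ennreal (normal_density 0 (sqrt 2) t) \<partial>lborel)"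
    by (rule nn_integral_cmult) auto
  also have "(\<integral>\<^sup>+t. ennreal (normal_density 0 (sqrt 2) t) \<partial>lborel) = 1"
    by (simp add: nn_integral_eq_integral)
  finally show ?thesis by simp
qed

lemma norm_sq_vec: "(norm (x::real^'n::finite))\<^sup>2 = (\<Sum>i\<in>UNIV. (x$i)\<^sup>2)"
  by (simp add: norm_vec_def L2_set_def sum_nonneg)

lemma std_gauss_tail:
  fixes t :: real
  shows "emeasure (std_gauss :: (real^'n::finite) measure) {w. t\<^sup>2 < (norm w)\<^sup>2}
     \<le> ennreal (sqrt 2 ^ CARD('n) * exp (- t\<^sup>2/4))"
proof -
  let ?M = "std_gauss :: (real^'n::finite) measure"
  have "emeasure ?M {w. t\<^sup>2 < (norm w)\<^sup>2} = (\<integral>\<^sup>+w. indicator {w. t\<^sup>2 < (norm w)\<^sup>2} w \<partial>?M)"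
    by (subst nn_integral_indicator) auto
  also have "\<dots> \<le> (\<integral>\<^sup>+w. ennreal (exp (((norm w)\<^sup>2 - t\<^sup>2)/4)) \<partial>?M)"
    by (intro nn_integral_mono) (auto split: split_indicator)
  also have "\<dots> = (\<integral>\<^sup>+w. ennreal (\<Prod>i\<in>UNIV. std_normal_density (w$i)) * ennreal (exp (((norm w)\<^sup>2 - t\<^sup>2)/4)) \<partial>(lborel::(real^'n) measure))"
    unfolding std_gauss_def
    by (subst nn_integral_density) (auto intro!: nn_integral_cong)
  also have "\<dots> = (\<integral>\<^sup>+w. ennreal (exp (- t\<^sup>2/4)) * (\<Prod>i\<in>UNIV. ennreal (std_normal_density (w$i) * exp ((w$i)\<^sup>2/4))) \<partial>(lborel::(real^'n) measure))"
  proof (intro nn_integral_cong)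
    fix w :: "real^'n"
    have "exp (((norm w)\<^sup>2 - t\<^sup>2)/4) = exp (- t\<^sup>2/4) * (\<Prod>i\<in>UNIV. exp ((w$i)\<^sup>2/4))"
      by (simp add: norm_sq_vec exp_sum[symmetric] exp_add[symmetric] sum_divide_distrib diff_divide_distrib)
    then show "ennreal (\<Prod>i\<in>UNIV. std_normal_density (w$i)) * ennreal (exp (((norm w)\<^sup>2 - t\<^sup>2)/4))
      = ennreal (exp (- t\<^sup>2/4)) * (\<Prod>i\<in>UNIV. ennreal (std_normal_density (w$i) * exp ((w$i)\<^sup>2/4)))"
      by (simp add: prod_ennreal prod.distrib ennreal_mult[symmetric] prod_nonneg mult_ac)
  qed
  also have "\<dots> = ennreal (exp (- t\<^sup>2/4)) * (\<integral>\<^sup>+w. (\<Prod>i\<in>UNIV. ennreal (std_normal_density (w$i) * exp ((w$i)\<^sup>2/4))) \<partial>(lborel::(real^'n) measure))"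
    by (rule nn_integral_cmult) auto
  also have "(\<integral>\<^sup>+w. (\<Prod>i\<in>UNIV. ennreal (std_normal_density (w$i) * exp ((w$i)\<^sup>2/4))) \<partial>(lborel::(real^'n) measure))
     = ennreal (sqrt 2) ^ CARD('n)"
    by (subst nn_integral_vec_prod) (auto simp: exp_moment_1d)
  finally show ?thesis
    by (simp add: ennreal_mult[symmetric] ennreal_power mult.commute)
qed



lemma gram_sqrt:
  fixes u :: "'n::finite \<Rightarrow> 'm::euclidean_space"
  shows "\<exists>A::real^'n^'n. \<forall>i j. (A ** transpose A)$i$j = u i \<bullet> u j"
proof -
  let ?W = "span (range u)"
  have dW: "dim ?W \<le> CARD('n)"
  proof -
    have "dim ?W \<le> card (range u)" by (rule dim_le_card) auto
    also have "\<dots> \<le> CARD('n)" by (rule card_image_le) simp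
    finally show ?thesis .
  qed
  have "dim ?W \<le> dim (UNIV :: (real^'n) set)" using dW by simp
  then obtain T :: "(real^'n) set" where T: "subspace T" "dim T = dim ?W"
    by (metis choose_subspace_of_subspace)
  obtain f g where f: "linear f" "f ` ?W = T" "\<And>x. x \<in> ?W \<Longrightarrow> norm (f x) = norm x"
    using isometries_subspaces[OF subspace_span T(1) T(2)[symmetric]] by metis
  have ip: "f a \<bullet> f b = a \<bullet> b" if "a \<in> ?W" "b \<in> ?W" for a b
  proof -
    have "a + b \<in> ?W" using that by (simp add: span_add)
    then have "norm (f (a + b)) = norm (a + b)" by (rule f(3))
    then have "(norm (f a + f b))\<^sup>2 = (norm (a + b))\<^sup>2" using f(1) by (simp add: linear_add)
    moreover have "(norm (f a))\<^sup>2 = (norm a)\<^sup>2" "(norm (f b))\<^sup>2 = (norm b)\<^sup>2" using f(3) that by auto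
    ultimately show ?thesis
      by (simp add: power2_norm_eq_inner inner_add_left inner_add_right inner_commute)
  qed
  define A :: "real^'n^'n" where "A = (\<chi> i. f (u i))"
  have "(A ** transpose A)$i$j = u i \<bullet> u j" for i j
  proof -
    have "(A ** transpose A)$i$j = f (u i) \<bullet> f (u j)"
      by (simp add: A_def matrix_matrix_mult_def transpose_def inner_vec_def)
    also have "\<dots> = u i \<bullet> u j" by (rule ip) (auto intro: span_base)
    finally show ?thesis .
  qed
  then show ?thesis by blast
qed



lemma cov_identity:
  fixes p :: "'s::finite \<Rightarrow> real"
  assumes "(\<Sum>s\<in>UNIV. p s) = 1"
  shows "(\<Sum>j\<in>UNIV. \<Sum>k\<in>UNIV. p j * p k / 2 * ((of_bool (i = j) - of_bool (i = k)) * (of_bool (l = j) - of_bool (l = k))))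
     = p i * (of_bool (i = l) - p l)"
proof -
  have e: "(of_bool (i = j) - of_bool (i = k)) * (of_bool (l = j) - of_bool (l = k)) =
     (of_bool (i = j \<and> l = j) - of_bool (i = j \<and> l = k) - of_bool (i = k \<and> l = j) + of_bool (i = k \<and> l = k) :: real)" for j k :: 's
    by (auto simp: of_bool_def)
  have "(\<Sum>j\<in>UNIV. \<Sum>k\<in>UNIV. p j * p k / 2 * ((of_bool (i = j) - of_bool (i = k)) * (of_bool (l = j) - of_bool (l = k))))
     = (\<Sum>j\<in>UNIV. \<Sum>k\<in>UNIV. p j * p k / 2 * of_bool (i = j \<and> l = j))
     - (\<Sum>j\<in>UNIV. \<Sum>k\<in>UNIV. p j * p k / 2 * of_bool (i = j \<and> l = k))
     - (\<Sum>j\<in>UNIV. \<Sum>k\<in>UNIV. p j * p k / 2 * of_bool (i = k \<and> l = j))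
     + (\<Sum>j\<in>UNIV. \<Sum>k\<in>UNIV. p j * p k / 2 * of_bool (i = k \<and> l = k))"
  proof -
    have "(\<Sum>j\<in>UNIV. \<Sum>k\<in>UNIV. p j * p k / 2 * ((of_bool (i = j) - of_bool (i = k)) * (of_bool (l = j) - of_bool (l = k))))
      = (\<Sum>j\<in>UNIV. \<Sum>k\<in>UNIV. p j * p k / 2 * of_bool (i = j \<and> l = j) - p j * p k / 2 * of_bool (i = j \<and> l = k)
          - p j * p k / 2 * of_bool (i = k \<and> l = j) + p j * p k / 2 * of_bool (i = k \<and> l = k))"
      by (intro sum.cong refl) (simp only: e, simp add: algebra_simps)
    then show ?thesis by (simp add: sum.distrib sum_subtractf)
  qed
  also have "(\<Sum>j\<in>UNIV. \<Sum>k\<in>UNIV. p j * p k / 2 * of_bool (i = j \<and> l = j)) = of_bool (i = l) * p i / 2"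
  proof -
    have "(\<Sum>j\<in>UNIV. \<Sum>k\<in>UNIV. p j * p k / 2 * of_bool (i = j \<and> l = j)) = (\<Sum>j\<in>UNIV. p j / 2 * of_bool (i = j \<and> l = j) * (\<Sum>k\<in>UNIV. p k))"
      by (intro sum.cong refl) (simp add: sum_distrib_left mult_ac)
    also have "\<dots> = (\<Sum>j\<in>UNIV. (if j = i then p i / 2 * of_bool (i = l) else 0))"
      using assms by (intro sum.cong) auto
    finally show ?thesis by simp
  qed
  also have "(\<Sum>j\<in>UNIV. \<Sum>k\<in>UNIV. p j * p k / 2 * of_bool (i = j \<and> l = k)) = p i * p l / 2"
  proof -
    have "(\<Sum>j\<in>UNIV. \<Sum>k\<in>UNIV. p j * p k / 2 * of_bool (i = j \<and> l = k)) = (\<Sum>j\<in>UNIV. if j = i then p i * p l / 2 else 0)"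
      by (intro sum.cong) (auto simp: of_bool_def if_distrib cong: if_cong)
    then show ?thesis by simp
  qed
  also have "(\<Sum>j\<in>UNIV. \<Sum>k\<in>UNIV. p j * p k / 2 * of_bool (i = k \<and> l = j)) = p i * p l / 2"
  proof -
    have "(\<Sum>j\<in>UNIV. \<Sum>k\<in>UNIV. p j * p k / 2 * of_bool (i = k \<and> l = j)) = (\<Sum>j\<in>UNIV. if j = l then p i * p l / 2 else 0)"
      by (intro sum.cong) (auto simp: of_bool_def if_distrib mult_ac cong: if_cong)
    then show ?thesis by simp
  qed
  also have "(\<Sum>j\<in>UNIV. \<Sum>k\<in>UNIV. p j * p k / 2 * of_bool (i = k \<and> l = k)) = of_bool (i = l) * p i / 2"
  proof -
    have "(\<Sum>j\<in>UNIV. \<Sum>k\<in>UNIV. p j * p k / 2 * of_bool (i = k \<and> l = k)) = (\<Sum>j\<in>UNIV. p j * (p i / 2 * of_bool (i = l)))"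
      by (intro sum.cong) (auto simp: of_bool_def if_distrib cong: if_cong intro!: sum.neutral)
    also have "\<dots> = (\<Sum>j\<in>UNIV. p j) * (p i / 2 * of_bool (i = l))" by (simp add: sum_distrib_right)
    also have "\<dots> = p i / 2 * of_bool (i = l)" using assms by simp
    finally show ?thesis by simp
  qed
  finally show ?thesis by (simp add: algebra_simps of_bool_def)
qed

lemma Gamma_sqrt:
  fixes P :: "nat \<Rightarrow> 's::finite \<Rightarrow> bool \<Rightarrow> 's \<Rightarrow> real"
  assumes y: "\<And>sa. 0 \<le> y$sa"
    and Pn: "\<And>s a s'. 0 \<le> P h s a s'"
    and Ps: "\<And>s a. (\<Sum>s'\<in>UNIV. P h s a s') = 1"
  shows "\<exists>A::real^'s^'s. A ** transpose A = Gamma P h y"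
proof -
  define u :: "'s \<Rightarrow> real^(('s \<times> bool) \<times> 's \<times> 's)" where
    "u i = (\<chi> c. sqrt (y$(fst c) * P h (fst (fst c)) (snd (fst c)) (fst (snd c)) * P h (fst (fst c)) (snd (fst c)) (snd (snd c)) / 2)
       * (of_bool (i = fst (snd c)) - of_bool (i = snd (snd c))))" for i
  have uu: "u i \<bullet> u l = Gamma P h y $ i $ l" for i l
  proof -
    have "u i \<bullet> u l = (\<Sum>c\<in>UNIV. (y$(fst c) * P h (fst (fst c)) (snd (fst c)) (fst (snd c)) * P h (fst (fst c)) (snd (fst c)) (snd (snd c)) / 2)
       * ((of_bool (i = fst (snd c)) - of_bool (i = snd (snd c))) * (of_bool (l = fst (snd c)) - of_bool (l = snd (snd c)))))"
    proof (unfold inner_vec_def, intro sum.cong refl)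
      fix c :: "('s \<times> bool) \<times> 's \<times> 's"
      let ?a = "y$(fst c) * P h (fst (fst c)) (snd (fst c)) (fst (snd c)) * P h (fst (fst c)) (snd (fst c)) (snd (snd c)) / 2"
      have "0 \<le> ?a" using y Pn by simp
      then have "sqrt ?a * sqrt ?a = ?a" by simp
      then show "u i $ c \<bullet> u l $ c = ?a * ((of_bool (i = fst (snd c)) - of_bool (i = snd (snd c))) * (of_bool (l = fst (snd c)) - of_bool (l = snd (snd c))))"
        unfolding u_def by (simp add: algebra_simps)
    qed
    also have "\<dots> = (\<Sum>sa\<in>UNIV. \<Sum>jk\<in>UNIV. (y$sa * P h (fst sa) (snd sa) (fst jk) * P h (fst sa) (snd sa) (snd jk) / 2)
       * ((of_bool (i = fst jk) - of_bool (i = snd jk)) * (of_bool (l = fst jk) - of_bool (l = snd jk))))"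
      by (simp add: sum.cartesian_product split_def)
    also have "\<dots> = (\<Sum>sa\<in>UNIV. y$sa * (\<Sum>j\<in>UNIV. \<Sum>k\<in>UNIV. P h (fst sa) (snd sa) j * P h (fst sa) (snd sa) k / 2
       * ((of_bool (i = j) - of_bool (i = k)) * (of_bool (l = j) - of_bool (l = k)))))"
      by (simp add: sum.cartesian_product split_def sum_distrib_left mult_ac)
    also have "\<dots> = (\<Sum>sa\<in>UNIV. y$sa * (P h (fst sa) (snd sa) i * (of_bool (i = l) - P h (fst sa) (snd sa) l)))"
      by (simp only: cov_identity[OF Ps])
    also have "\<dots> = Gamma P h y $ i $ l"
      by (simp add: Gamma_def of_bool_def)
    finally show ?thesis .
  qed
  obtain A :: "real^'s^'s" where A: "\<forall>i j. (A ** transpose A)$i$j = u i \<bullet> u j"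
    using gram_sqrt by blast
  then have "A ** transpose A = Gamma P h y" by (simp add: vec_eq_iff uu)
  then show ?thesis by blast
qed



lemma infnorm_vec_le: "(\<And>i. \<bar>(z::real^'n::finite)$i\<bar> \<le> B) \<Longrightarrow> infnorm z \<le> B"
  unfolding infnorm_cart by (rule cSup_least) auto

lemma mvmult_meas[measurable]: "(\<lambda>w. (A::real^'n::finite^'m::finite) *v w) \<in> borel_measurable borel"
  by (intro borel_measurable_continuous_onI linear_continuous_on) simp

lemma infnorm_meas[measurable]: "(infnorm :: real^'n::finite \<Rightarrow> real) \<in> borel_measurable borel"
  by (intro borel_measurable_continuous_onI continuous_on_infnorm continuous_on_id)

lemma meas_std_gauss: "measurable std_gauss N = measurable borel N"
  by (rule measurable_cong_sets) auto

lemma Delta_nonneg: "x \<in> Delta \<Longrightarrow> 0 \<le> x$i" by (simp add: Delta_def)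
lemma Delta_sum: "x \<in> Delta \<Longrightarrow> (\<Sum>i\<in>UNIV. x$i) = 1" by (simp add: Delta_def)

lemma Gamma_diag_le:
  assumes y: "y \<in> Delta"
  shows "Gamma P h y $ i $ i \<le> 1/4"
proof -
  have "Gamma P h y $ i $ i = (\<Sum>sa\<in>UNIV. y$sa * (P h (fst sa) (snd sa) i * (1 - P h (fst sa) (snd sa) i)))"
    by (simp add: Gamma_def)
  also have "\<dots> \<le> (\<Sum>sa\<in>UNIV. y$sa * (1/4))"
  proof (intro sum_mono mult_left_mono)
    fix sa
    show "P h (fst sa) (snd sa) i * (1 - P h (fst sa) (snd sa) i) \<le> 1/4"
      using sum_squares_ge_zero[of "P h (fst sa) (snd sa) i - 1/2" 0]
      by (simp add: algebra_simps power2_eq_square)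
    show "0 \<le> y$sa" using Delta_nonneg[OF y] .
  qed
  also have "\<dots> = 1/4" using Delta_sum[OF y] by (simp add: sum_distrib_right[symmetric] sum_divide_distrib[symmetric])
  finally show ?thesis .
qed

lemma gauss_cov_prob: "prob_space (gauss_cov (G :: real^'n::finite^'n))"
  unfolding gauss_cov_def
  by (intro prob_space.prob_space_distr prob_space_std_gauss) (simp add: meas_std_gauss)

lemma sets_gauss_cov[simp]: "sets (gauss_cov G) = sets borel"
  unfolding gauss_cov_def by simp

lemma gauss_cov_tail:
  fixes P :: "nat \<Rightarrow> 's::finite \<Rightarrow> bool \<Rightarrow> 's \<Rightarrow> real"
  assumes y: "y \<in> Delta"
    and Pn: "\<And>s a s'. 0 \<le> P h s a s'"
    and Ps: "\<And>s a. (\<Sum>s'\<in>UNIV. P h s a s') = 1"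
    and t: "0 \<le> t"
  shows "measure (gauss_cov (Gamma P h y)) {z. t < infnorm z} \<le> sqrt 2 ^ CARD('s) * exp (- t\<^sup>2)"
proof -
  let ?A = "SOME A :: real^'s^'s. A ** transpose A = Gamma P h y"
  have ex: "\<exists>A::real^'s^'s. A ** transpose A = Gamma P h y"
    by (rule Gamma_sqrt) (use Delta_nonneg[OF y] Pn Ps in auto)
  have AA: "?A ** transpose ?A = Gamma P h y" by (rule someI_ex[OF ex])
  have rowb: "norm (?A $ i) \<le> 1/2" for i
  proof -
    have "(norm (?A $ i))\<^sup>2 = (?A ** transpose ?A) $ i $ i"
      by (simp add: power2_norm_eq_inner inner_vec_def matrix_matrix_mult_def transpose_def)
    also have "\<dots> \<le> 1/4" using AA Gamma_diag_le[OF y] by simp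
    finally have "(norm (?A $ i))\<^sup>2 \<le> (1/2)\<^sup>2" by (simp add: power2_eq_square)
    then show ?thesis by (rule power2_le_imp_le) simp
  qed
  have sub: "(\<lambda>w. ?A *v w) -` {z. t < infnorm z} \<inter> space std_gauss \<subseteq> {w. (2*t)\<^sup>2 < (norm w)\<^sup>2}"
  proof
    fix w assume "w \<in> (\<lambda>w. ?A *v w) -` {z. t < infnorm z} \<inter> space std_gauss"
    then have lt: "t < infnorm (?A *v w)" by simp
    have "infnorm (?A *v w) \<le> norm w / 2"
    proof (rule infnorm_vec_le)
      fix i
      have "\<bar>(?A *v w) $ i\<bar> = \<bar>?A $ i \<bullet> w\<bar>" by (simp add: matrix_mult_dot)
      also have "\<dots> \<le> norm (?A $ i) * norm w" by (rule Cauchy_Schwarz_ineq2)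
      also have "\<dots> \<le> 1/2 * norm w" by (rule mult_right_mono[OF rowb]) simp
      finally show "\<bar>(?A *v w) $ i\<bar> \<le> norm w / 2" by simp
    qed
    with lt t have "2*t < norm w" by simp
    with t have "(2*t)\<^sup>2 < (norm w)\<^sup>2" by (intro power_strict_mono) auto
    then show "w \<in> {w. (2*t)\<^sup>2 < (norm w)\<^sup>2}" by simp
  qed
  have "emeasure (gauss_cov (Gamma P h y)) {z. t < infnorm z}
      = emeasure std_gauss ((\<lambda>w. ?A *v w) -` {z. t < infnorm z} \<inter> space std_gauss)"
    unfolding gauss_cov_def
    by (rule emeasure_distr) (auto simp: meas_std_gauss)
  also have "\<dots> \<le> emeasure (std_gauss :: (real^'s) measure) {w. (2*t)\<^sup>2 < (norm w)\<^sup>2}"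
    by (rule emeasure_mono[OF sub]) simp
  also have "\<dots> \<le> ennreal (sqrt 2 ^ CARD('s) * exp (- (2*t)\<^sup>2/4))"
    by (rule std_gauss_tail)
  also have "- (2*t)\<^sup>2/4 = - t\<^sup>2" by (simp add: power2_eq_square)
  finally have "emeasure (gauss_cov (Gamma P h y)) {z. t < infnorm z} \<le> ennreal (sqrt 2 ^ CARD('s) * exp (- t\<^sup>2))" by simp
  then show ?thesis
    by (simp add: measure_def enn2real_leI)
qed



lemma Delta_closed: "closed (Delta :: (real^'n::finite) set)"
proof -
  have "Delta = (\<Inter>i. {x::real^'n. 0 \<le> x$i}) \<inter> {x. (\<Sum>i\<in>UNIV. x$i) = 1}"
    by (auto simp: Delta_def)
  moreover have "closed {x::real^'n. 0 \<le> x$i}" for i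
    by (intro closed_Collect_le continuous_intros)
  moreover have "closed {x::real^'n. (\<Sum>i\<in>UNIV. x$i) = 1}"
    by (intro closed_Collect_eq continuous_intros)
  ultimately show ?thesis by (metis (no_types) closed_INT closed_Int)
qed

lemma Delta_convex: "convex (Delta :: (real^'n::finite) set)"
  unfolding convex_def Delta_def
  by (auto simp: sum.distrib sum_distrib_left[symmetric])

lemma Delta_ne: "(Delta :: (real^'n::finite) set) \<noteq> {}"
proof -
  obtain i :: 'n where True by simp
  have "axis i 1 \<in> (Delta :: (real^'n) set)"
    by (auto simp: Delta_def axis_def)
  then show ?thesis by blast
qed

lemma closest_Delta: "closest_point Delta v \<in> Delta"
  by (rule closest_point_in_set[OF Delta_closed Delta_ne])

lemma next_state_Delta: "next_state N P h y z \<in> Delta"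
  unfolding next_state_def by (rule closest_Delta)

lemma cont_closest_Delta: "continuous_on UNIV (closest_point (Delta :: (real^'n::finite) set))"
  by (rule continuous_on_closest_point[OF Delta_convex Delta_closed Delta_ne])

lemma cont_phi: "continuous_on UNIV (phi P h)"
  unfolding phi_def by (intro continuous_on_vec_lambda continuous_intros)

lemma cont_reward: "continuous_on UNIV (reward r h)"
  unfolding reward_def by (intro continuous_intros)

lemma meas_reward[measurable]: "reward r h \<in> borel_measurable borel"
  by (rule borel_measurable_continuous_onI[OF cont_reward])

lemma cont_next: "continuous_on UNIV (\<lambda>(y, z). next_state N P h y z)"
proof -
  have "continuous_on UNIV (\<lambda>(y, z). phi P h y + (1 / sqrt (real N)) *\<^sub>R z)"
    using continuous_on_compose2[OF cont_phi[of P h] continuous_on_fst[OF continuous_on_id]]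
    by (auto intro!: continuous_intros simp: split_beta)
  from continuous_on_compose[OF this continuous_on_subset[OF cont_closest_Delta subset_UNIV]]
  show ?thesis by (simp add: o_def case_prod_beta' next_state_def)
qed

lemma meas_next[measurable]: "(\<lambda>p. next_state N P h (fst p) (snd p)) \<in> borel_measurable borel"
  using borel_measurable_continuous_onI[OF cont_next[of N P h]] by (simp add: case_prod_beta')

lemma meas_into_prod_borel:
  assumes "f \<in> measurable M (borel \<Otimes>\<^sub>M borel)"
  shows "f \<in> measurable M (borel :: ('a::second_countable_topology \<times> 'b::second_countable_topology) measure)"
proof -
  have e: "(borel \<Otimes>\<^sub>M borel) = (borel :: ('a \<times> 'b) measure)" by (rule borel_prod)
  show ?thesis using assms unfolding e .
qed

lemma Vaux_cong:
  "(\<And>x j. j < k \<Longrightarrow> \<pi> x (H - j) = \<pi>' x (H - j)) \<Longrightarrow> Vaux H N P r ys \<pi> k = Vaux H N P r ys \<pi>' k"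
proof (induction k)
  case 0 then show ?case by (simp add: fun_eq_iff)
next
  case (Suc k)
  then have IH: "Vaux H N P r ys \<pi> k = Vaux H N P r ys \<pi>' k" by auto
  show ?case using Suc.prems[of k] by (simp add: fun_eq_iff IH Let_def)
qed

lemma (in prob_space) integral_le_const': "(\<And>x. f x \<le> (c::real)) \<Longrightarrow> 0 \<le> c \<Longrightarrow> integral\<^sup>L M f \<le> c"
proof (cases "integrable M f")
  case True
  assume "\<And>x. f x \<le> c"
  then have "integral\<^sup>L M f \<le> integral\<^sup>L M (\<lambda>_. c)" by (intro integral_mono True) auto
  then show ?thesis by (simp add: prob_space)
next
  case False then show "0 \<le> c \<Longrightarrow> ?thesis" by (simp add: not_integrable_integral_eq)
qed

lemma reward_bounds:
  assumes y: "y \<in> Delta" and r: "\<And>s a. 0 \<le> r h s a" "\<And>s a. r h s a \<le> R"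
  shows "0 \<le> reward r h y" "reward r h y \<le> R"
proof -
  show "0 \<le> reward r h y" unfolding reward_def using r Delta_nonneg[OF y] by (intro sum_nonneg) auto
  have "reward r h y \<le> (\<Sum>sa\<in>UNIV. R * y$sa)"
    unfolding reward_def using r Delta_nonneg[OF y] by (intro sum_mono mult_right_mono) auto
  also have "\<dots> = R" using Delta_sum[OF y] by (simp add: sum_distrib_left[symmetric])
  finally show "reward r h y \<le> R" .
qed

lemma Vaux_bounds:
  assumes pv: "\<And>h x. h \<in> {1..H} \<Longrightarrow> x \<in> Delta \<Longrightarrow> \<pi> x h \<in> Delta"
    and r: "\<And>h s a. h \<in> {1..H} \<Longrightarrow> 0 \<le> r h s a" "\<And>h s a. h \<in> {1..H} \<Longrightarrow> r h s a \<le> R"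
    and R: "0 \<le> R"
  shows "k \<le> H \<Longrightarrow> x \<in> Delta \<Longrightarrow> 0 \<le> Vaux H N P r ys \<pi> k x \<and> Vaux H N P r ys \<pi> k x \<le> real k * R"
proof (induction k arbitrary: x)
  case 0 then show ?case by simp
next
  case (Suc k)
  let ?h = "H - k"
  have h: "?h \<in> {1..H}" using Suc.prems by auto
  have y: "\<pi> x ?h \<in> Delta" using pv[OF h Suc.prems(2)] .
  let ?M = "gauss_cov (Gamma P ?h (ys ?h))"
  interpret prob_space ?M by (rule gauss_cov_prob)
  have b: "0 \<le> Vaux H N P r ys \<pi> k z' \<and> Vaux H N P r ys \<pi> k z' \<le> real k * R" if "z' \<in> Delta" for z'
    using Suc.IH[OF _ that] Suc.prems by auto
  have i1: "0 \<le> (\<integral>z. Vaux H N P r ys \<pi> k (next_state N P ?h (\<pi> x ?h) z) \<partial>?M)"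
    by (rule integral_nonneg_AE, rule AE_I2) (use b[OF next_state_Delta] in auto)
  have i2: "(\<integral>z. Vaux H N P r ys \<pi> k (next_state N P ?h (\<pi> x ?h) z) \<partial>?M) \<le> real k * R"
    by (rule integral_le_const') (use b[OF next_state_Delta] R in auto)
  have rb: "0 \<le> reward r ?h (\<pi> x ?h)" "reward r ?h (\<pi> x ?h) \<le> R"
    using reward_bounds[OF y, of r ?h R] r[OF h] by auto
  show ?case using i1 i2 rb by (simp add: Let_def algebra_simps)
qed

lemma Vaux_meas:
  fixes \<pi> :: "real^'s::finite \<Rightarrow> nat \<Rightarrow> real^('s \<times> bool)"
  assumes pm: "\<And>h. (\<lambda>x. \<pi> x h) \<in> borel_measurable borel"
  shows "Vaux H N P r ys \<pi> k \<in> borel_measurable borel"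
proof (induction k)
  case 0 then show ?case by simp
next
  case (Suc k)
  let ?h = "H - k"
  let ?M = "gauss_cov (Gamma P ?h (ys ?h))"
  interpret prob_space ?M by (rule gauss_cov_prob)
  note [measurable] = Suc.IH pm
  have "(\<lambda>(x, z). Vaux H N P r ys \<pi> k (next_state N P ?h (\<pi> x ?h) z)) \<in> borel_measurable (borel \<Otimes>\<^sub>M borel)"
  proof -
    have m1: "(\<lambda>(x, z::real^'s). (\<pi> x ?h, z)) \<in> measurable (borel \<Otimes>\<^sub>M borel) (borel \<Otimes>\<^sub>M borel)"
      by measurable
    have m2: "(\<lambda>(x, z::real^'s). (\<pi> x ?h, z)) \<in> measurable (borel \<Otimes>\<^sub>M borel) borel"
      by (rule meas_into_prod_borel[OF m1])
    have "(\<lambda>p. Vaux H N P r ys \<pi> k (next_state N P ?h (fst p) (snd p))) \<in> borel_measurable borel"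
      by measurable
    from measurable_comp[OF m2 this] show ?thesis by (simp add: o_def split_beta)
  qed
  then have "(\<lambda>(x, z). Vaux H N P r ys \<pi> k (next_state N P ?h (\<pi> x ?h) z)) \<in> borel_measurable (borel \<Otimes>\<^sub>M ?M)"
    by (simp add: measurable_cong_sets[OF sets_pair_measure_cong[OF refl sets_gauss_cov] refl])
  then have "(\<lambda>x. \<integral>z. Vaux H N P r ys \<pi> k (next_state N P ?h (\<pi> x ?h) z) \<partial>?M) \<in> borel_measurable borel"
    by (rule borel_measurable_lebesgue_integral[where f="\<lambda>x z. Vaux H N P r ys \<pi> k (next_state N P ?h (\<pi> x ?h) z)", simplified])
  then show ?case by (simp add: Let_def)
qed



lemma redistribute:
  fixes c lo hi :: "'s::finite \<Rightarrow> real"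
  assumes b: "\<And>s. lo s \<le> c s" "\<And>s. c s \<le> hi s"
    and sl: "(\<Sum>s\<in>UNIV. lo s) \<le> \<alpha>" and sh: "\<alpha> \<le> (\<Sum>s\<in>UNIV. hi s)"
  shows "\<exists>t. (\<forall>s. lo s \<le> t s \<and> t s \<le> hi s \<and> \<bar>t s - c s\<bar> \<le> \<bar>(\<Sum>s\<in>UNIV. c s) - \<alpha>\<bar>) \<and> (\<Sum>s\<in>UNIV. t s) = \<alpha>"
proof (cases "(\<Sum>s\<in>UNIV. c s) - \<alpha> \<ge> 0")
  case True
  define e where "e = (\<Sum>s\<in>UNIV. c s) - \<alpha>"
  define D where "D = (\<Sum>s\<in>UNIV. c s - lo s)"
  define \<theta> where "\<theta> = e / D"
  have eD: "e \<le> D" using sl by (simp add: e_def D_def sum_subtractf)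
  have e0: "0 \<le> e" using True by (simp add: e_def)
  have D0: "0 \<le> D" using e0 eD by simp
  have th0: "0 \<le> \<theta>" "\<theta> \<le> 1" using e0 eD D0 by (auto simp: \<theta>_def divide_le_eq_1)
  have thD: "\<theta> * D = e" using e0 eD by (cases "D = 0") (auto simp: \<theta>_def)
  define t where "t s = c s - \<theta> * (c s - lo s)" for s
  have "lo s \<le> t s \<and> t s \<le> hi s \<and> \<bar>t s - c s\<bar> \<le> e" for s
  proof -
    have cl: "0 \<le> c s - lo s" using b by simp
    have "c s - lo s \<le> D" unfolding D_def
      by (rule member_le_sum) (use b in auto)
    then have "\<theta> * (c s - lo s) \<le> \<theta> * D" by (rule mult_left_mono) (use th0 in auto)
    moreover have "\<theta> * (c s - lo s) \<le> 1 * (c s - lo s)" by (rule mult_right_mono) (use th0 cl in auto)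
    moreover have "0 \<le> \<theta> * (c s - lo s)" using th0 cl by simp
    ultimately show ?thesis using b[of s] thD by (auto simp: t_def)
  qed
  moreover have "(\<Sum>s\<in>UNIV. t s) = \<alpha>"
  proof -
    have "(\<Sum>s\<in>UNIV. \<theta> * (c s - lo s)) = \<theta> * D" by (simp add: D_def sum_distrib_left)
    then have "(\<Sum>s\<in>UNIV. t s) = (\<Sum>s\<in>UNIV. c s) - \<theta> * D"
      by (simp add: t_def sum_subtractf)
    then show ?thesis using thD by (simp add: e_def)
  qed
  ultimately show ?thesis using e0 by (auto simp: e_def)
next
  case False
  define e where "e = \<alpha> - (\<Sum>s\<in>UNIV. c s)"
  define D where "D = (\<Sum>s\<in>UNIV. hi s - c s)"
  define \<theta> where "\<theta> = e / D"
  have eD: "e \<le> D" using sh by (simp add: e_def D_def sum_subtractf)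
  have e0: "0 \<le> e" using False by (simp add: e_def)
  have D0: "0 \<le> D" using e0 eD by simp
  have th0: "0 \<le> \<theta>" "\<theta> \<le> 1" using e0 eD D0 by (auto simp: \<theta>_def divide_le_eq_1)
  have thD: "\<theta> * D = e" using e0 eD by (cases "D = 0") (auto simp: \<theta>_def)
  define t where "t s = c s + \<theta> * (hi s - c s)" for s
  have "lo s \<le> t s \<and> t s \<le> hi s \<and> \<bar>t s - c s\<bar> \<le> e" for s
  proof -
    have cl: "0 \<le> hi s - c s" using b by simp
    have "hi s - c s \<le> D" unfolding D_def
      by (rule member_le_sum) (use b in auto)
    then have "\<theta> * (hi s - c s) \<le> \<theta> * D" by (rule mult_left_mono) (use th0 in auto)
    moreover have "\<theta> * (hi s - c s) \<le> 1 * (hi s - c s)" by (rule mult_right_mono) (use th0 cl in auto)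
    moreover have "0 \<le> \<theta> * (hi s - c s)" using th0 cl by simp
    ultimately show ?thesis using b[of s] thD by (auto simp: t_def)
  qed
  moreover have "(\<Sum>s\<in>UNIV. t s) = \<alpha>"
  proof -
    have "(\<Sum>s\<in>UNIV. \<theta> * (hi s - c s)) = \<theta> * D" by (simp add: D_def sum_distrib_left)
    then have "(\<Sum>s\<in>UNIV. t s) = (\<Sum>s\<in>UNIV. c s) + \<theta> * D"
      by (simp add: t_def sum.distrib)
    then show ?thesis using thD by (simp add: e_def)
  qed
  ultimately show ?thesis using e0 False by (auto simp: e_def)
qed

lemma sum_pair_bool: "(\<Sum>sa\<in>UNIV. f sa) = (\<Sum>s\<in>UNIV. f (s, True) + f (s, False))"
proof -
  have "(\<Sum>sa\<in>UNIV. f sa) = (\<Sum>s\<in>UNIV. \<Sum>v\<in>UNIV. f (s, v))"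
    by (simp add: sum.cartesian_product split_def)
  then show ?thesis by (simp add: UNIV_bool add.commute)
qed

lemma Yset_facts:
  assumes "y \<in> Yset \<alpha> x"
  shows "\<And>sa. 0 \<le> y$sa" "\<And>s. y$(s,False) + y$(s,True) = x$s" "(\<Sum>s\<in>UNIV. y$(s,True)) = \<alpha>" "y \<in> Delta"
  using assms by (auto simp: Yset_def Delta_def)

lemma infnorm_comp: "infnorm (v::real^'n::finite) \<le> \<rho> \<Longrightarrow> \<bar>v$i\<bar> \<le> \<rho>"
  using component_le_infnorm_cart[of v i] by simp

lemma y_construct:
  fixes x x' :: "real^'s::finite" and y ys y0 :: "real^('s \<times> bool)"
  assumes x: "x \<in> Delta" and x': "x' \<in> Delta"
    and y: "y \<in> Yset \<alpha> x" and yb: "infnorm (y - ys) \<le> \<rho>"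
    and y0: "y0 \<in> Yset \<alpha> x'" and y0b: "infnorm (y0 - ys) \<le> \<rho>"
  shows "\<exists>y'. y' \<in> Yset \<alpha> x' \<and> infnorm (y' - ys) \<le> \<rho> \<and>
           infnorm (y' - y) \<le> (real CARD('s) + 1) * infnorm (x - x')"
proof -
  define d where "d = infnorm (x - x')"
  have dx: "\<bar>x'$s - x$s\<bar> \<le> d" for s
    using component_le_infnorm_cart[of "x - x'" s] by (simp add: d_def abs_minus_commute)
  define t where "t s = y$(s,True)" for s
  define a where "a s = ys$(s,True)" for s
  define b where "b s = ys$(s,False)" for s
  define lo where "lo s = max (max 0 (a s - \<rho>)) (x'$s - b s - \<rho>)" for s
  define hi where "hi s = min (min (x'$s) (a s + \<rho>)) (x'$s - b s + \<rho>)" for s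
  note yf = Yset_facts[OF y] and y0f = Yset_facts[OF y0]
  have yc: "\<bar>y$sa - ys$sa\<bar> \<le> \<rho>" for sa using infnorm_comp[OF yb, of sa] by simp
  have y0c: "\<bar>y0$sa - ys$sa\<bar> \<le> \<rho>" for sa using infnorm_comp[OF y0b, of sa] by simp
  have tlo: "max (max 0 (a s - \<rho>)) (x$s - b s - \<rho>) \<le> t s" for s
    using yf(1)[of "(s,True)"] yc[of "(s,True)"] yc[of "(s,False)"] yf(2)[of s]
    by (auto simp: t_def a_def b_def abs_le_iff)
  have thi: "t s \<le> min (min (x$s) (a s + \<rho>)) (x$s - b s + \<rho>)" for s
    using yf(1)[of "(s,False)"] yc[of "(s,True)"] yc[of "(s,False)"] yf(2)[of s]
    by (auto simp: t_def a_def b_def abs_le_iff)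
  define t0 where "t0 s = y0$(s,True)" for s
  have t0b: "lo s \<le> t0 s \<and> t0 s \<le> hi s" for s
    using y0f(1)[of "(s,True)"] y0f(1)[of "(s,False)"] y0c[of "(s,True)"] y0c[of "(s,False)"] y0f(2)[of s]
    by (auto simp: t0_def a_def b_def lo_def hi_def abs_le_iff)
  define c where "c s = max (lo s) (min (hi s) (t s))" for s
  have cb: "lo s \<le> c s" "c s \<le> hi s" for s using t0b[of s] by (auto simp: c_def)
  have cd: "min 0 (x'$s - x$s) \<le> c s - t s \<and> c s - t s \<le> max 0 (x'$s - x$s)" for s
    using tlo[of s] thi[of s] t0b[of s] unfolding c_def lo_def hi_def
    by (auto simp: max_def min_def split: if_splits)
  have cd1: "\<bar>c s - t s\<bar> \<le> d" and cd2: "\<bar>(x'$s - c s) - (x$s - t s)\<bar> \<le> d" for s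
    using cd[of s] dx[of s] by (auto simp: max_def min_def abs_le_iff split: if_splits)
  have "(\<Sum>s\<in>UNIV. lo s) \<le> (\<Sum>s\<in>UNIV. t0 s)" by (rule sum_mono) (use t0b in auto)
  then have sl: "(\<Sum>s\<in>UNIV. lo s) \<le> \<alpha>" using y0f(3) by (simp add: t0_def)
  have "(\<Sum>s\<in>UNIV. t0 s) \<le> (\<Sum>s\<in>UNIV. hi s)" by (rule sum_mono) (use t0b in auto)
  then have sh: "\<alpha> \<le> (\<Sum>s\<in>UNIV. hi s)" using y0f(3) by (simp add: t0_def)
  obtain t' where t': "\<And>s. lo s \<le> t' s \<and> t' s \<le> hi s \<and> \<bar>t' s - c s\<bar> \<le> \<bar>(\<Sum>s\<in>UNIV. c s) - \<alpha>\<bar>"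
    and t'sum: "(\<Sum>s\<in>UNIV. t' s) = \<alpha>"
    using redistribute[OF cb sl sh] by blast
  have ebound: "\<bar>(\<Sum>s\<in>UNIV. c s) - \<alpha>\<bar> \<le> real CARD('s) * d"
  proof -
    have "(\<Sum>s\<in>UNIV. c s) - \<alpha> = (\<Sum>s\<in>UNIV. c s - t s)"
      using yf(3) by (simp add: sum_subtractf t_def)
    then have "\<bar>(\<Sum>s\<in>UNIV. c s) - \<alpha>\<bar> \<le> (\<Sum>s\<in>UNIV. \<bar>c s - t s\<bar>)" by (simp add: sum_abs)
    also have "\<dots> \<le> (\<Sum>s\<in>(UNIV::'s set). d)" by (rule sum_mono) (rule cd1)
    finally show ?thesis by simp
  qed
  define y' :: "real^('s \<times> bool)" where "y' = (\<chi> sa. if snd sa then t' (fst sa) else x'$(fst sa) - t' (fst sa))"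
  have y'T: "y'$(s,True) = t' s" and y'F: "y'$(s,False) = x'$s - t' s" for s by (simp_all add: y'_def)
  have lohi: "0 \<le> lo s" "hi s \<le> x'$s" for s by (auto simp: lo_def hi_def)
  have "y' \<in> Yset \<alpha> x'"
  proof -
    have nn: "0 \<le> y'$sa" for sa
      using t'[of "fst sa"] lohi[of "fst sa"] by (cases sa; cases "snd sa") (auto simp: y'_def)
    have "(\<Sum>sa\<in>UNIV. y'$sa) = (\<Sum>s\<in>UNIV. x'$s)" by (simp add: sum_pair_bool y'T y'F)
    also have "\<dots> = 1" using Delta_sum[OF x'] .
    finally show ?thesis using nn t'sum by (simp add: Yset_def Delta_def y'T y'F)
  qed
  moreover have "infnorm (y' - ys) \<le> \<rho>"
  proof (rule infnorm_vec_le)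
    fix sa :: "'s \<times> bool"
    obtain s v where sa: "sa = (s, v)" by (cases sa)
    show "\<bar>(y' - ys)$sa\<bar> \<le> \<rho>"
      using t'[of s] unfolding sa
      by (cases v) (auto simp: y'T y'F lo_def hi_def a_def b_def abs_le_iff)
  qed
  moreover have "infnorm (y' - y) \<le> (real CARD('s) + 1) * d"
  proof (rule infnorm_vec_le)
    fix sa :: "'s \<times> bool"
    obtain s v where sa: "sa = (s, v)" by (cases sa)
    have e1: "\<bar>t' s - c s\<bar> \<le> real CARD('s) * d" using t'[of s] ebound by linarith
    have yF: "y$(s,False) = x$s - t s" using yf(2)[of s] by (simp add: t_def)
    show "\<bar>(y' - y)$sa\<bar> \<le> (real CARD('s) + 1) * d"
      using e1 cd1[of s] cd2[of s] unfolding sa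
      by (cases v) (auto simp: y'T y'F yF t_def abs_le_iff algebra_simps)
  qed
  ultimately show ?thesis by (auto simp: d_def)
qed



lemma lipconst_prop:
  fixes P :: "nat \<Rightarrow> 's::finite \<Rightarrow> bool \<Rightarrow> 's \<Rightarrow> real"
  shows "0 \<le> lipconst P h"
    and "y \<in> Delta \<Longrightarrow> y' \<in> Delta \<Longrightarrow> infnorm (phi P h y - phi P h y') \<le> lipconst P h * infnorm (y - y')"
proof -
  let ?S = "{L. 0 \<le> L \<and> (\<forall>y\<in>Delta. \<forall>y'\<in>Delta. infnorm (phi P h y - phi P h y') \<le> L * infnorm (y - y'))}"
  define B where "B = (\<Sum>sa\<in>UNIV. \<Sum>s'\<in>UNIV. \<bar>P h (fst sa) (snd sa) s'\<bar>)"
  have gen: "infnorm (phi P h y - phi P h y') \<le> B * infnorm (y - y')" for y y' :: "real^('s \<times> bool)"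
  proof (rule infnorm_vec_le)
    fix s'
    have "\<bar>(phi P h y - phi P h y') $ s'\<bar> = \<bar>\<Sum>sa\<in>UNIV. (y - y')$sa * P h (fst sa) (snd sa) s'\<bar>"
      by (simp add: phi_def sum_subtractf left_diff_distrib)
    also have "\<dots> \<le> (\<Sum>sa\<in>UNIV. \<bar>(y - y')$sa\<bar> * \<bar>P h (fst sa) (snd sa) s'\<bar>)"
      by (rule order_trans[OF sum_abs]) (simp add: abs_mult)
    also have "\<dots> \<le> (\<Sum>sa\<in>UNIV. infnorm (y - y') * (\<Sum>s''\<in>UNIV. \<bar>P h (fst sa) (snd sa) s''\<bar>))"
    proof (rule sum_mono)
      fix sa
      have "\<bar>P h (fst sa) (snd sa) s'\<bar> \<le> (\<Sum>s''\<in>UNIV. \<bar>P h (fst sa) (snd sa) s''\<bar>)"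
        by (rule member_le_sum) auto
      then show "\<bar>(y - y')$sa\<bar> * \<bar>P h (fst sa) (snd sa) s'\<bar> \<le> infnorm (y - y') * (\<Sum>s''\<in>UNIV. \<bar>P h (fst sa) (snd sa) s''\<bar>)"
        by (intro mult_mono component_le_infnorm_cart) (auto intro: infnorm_pos_le)
    qed
    also have "\<dots> = B * infnorm (y - y')" by (simp add: B_def sum_distrib_left mult.commute)
    finally show "\<bar>(phi P h y - phi P h y') $ s'\<bar> \<le> B * infnorm (y - y')" .
  qed
  have B0: "0 \<le> B" unfolding B_def by (intro sum_nonneg) auto
  have ne: "B \<in> ?S" using gen B0 by auto
  have bdd: "bdd_below ?S" by (rule bdd_belowI[of _ 0]) auto
  show "0 \<le> lipconst P h" unfolding lipconst_def by (rule cInf_greatest) (use ne in auto)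
  assume y: "y \<in> Delta" and y': "y' \<in> Delta"
  show "infnorm (phi P h y - phi P h y') \<le> lipconst P h * infnorm (y - y')"
  proof (cases "infnorm (y - y') = 0")
    case True
    then have "y = y'" by (simp add: infnorm_eq_0)
    then show ?thesis by (simp add: infnorm_0)
  next
    case False
    then have pos: "0 < infnorm (y - y')" using infnorm_pos_le[of "y - y'"] by linarith
    have "infnorm (phi P h y - phi P h y') / infnorm (y - y') \<le> lipconst P h"
      unfolding lipconst_def
    proof (rule cInf_greatest)
      show "?S \<noteq> {}" using ne by auto
      fix L assume "L \<in> ?S"
      then have "infnorm (phi P h y - phi P h y') \<le> L * infnorm (y - y')" using y y' by auto
      then show "infnorm (phi P h y - phi P h y') / infnorm (y - y') \<le> L" using pos by (simp add: divide_le_eq)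
    qed
    then show ?thesis using pos by (simp add: divide_le_eq)
  qed
qed

lemma rmax_ge:
  assumes "h \<in> {1..H}" shows "r h s a \<le> rmax H r"
proof -
  have "r h s a \<in> (\<lambda>(h,s,a). r h s a) ` ({1..H} \<times> UNIV \<times> UNIV)"
    using assms by (intro image_eqI[where x="(h,s,a)"]) auto
  then show ?thesis unfolding rmax_def by (intro Max_ge) auto
qed

lemma rmax_nonneg:
  fixes r :: "nat \<Rightarrow> 's::finite \<Rightarrow> bool \<Rightarrow> real"
  assumes "1 \<le> H" "\<And>h s a. h \<in> {1..H} \<Longrightarrow> 0 \<le> r h s a" shows "0 \<le> rmax H r"
proof -
  obtain s :: 's where True by simp
  have "0 \<le> r 1 s True" using assms by auto
  also have "\<dots> \<le> rmax H r" by (rule rmax_ge) (use assms in auto)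
  finally show ?thesis .
qed

lemma card_sb: "CARD('s::finite \<times> bool) = 2 * CARD('s)" by simp

lemma reward_diff:
  fixes r :: "nat \<Rightarrow> 's::finite \<Rightarrow> bool \<Rightarrow> real"
  assumes "\<And>s a. \<bar>r h s a\<bar> \<le> R"
  shows "reward r h y - reward r h y' \<le> R * (2 * real CARD('s)) * infnorm (y - y')"
proof -
  have "reward r h y - reward r h y' = (\<Sum>sa\<in>UNIV. r h (fst sa) (snd sa) * (y - y')$sa)"
    by (simp add: reward_def sum_subtractf right_diff_distrib)
  also have "\<dots> \<le> (\<Sum>sa\<in>UNIV. \<bar>r h (fst sa) (snd sa)\<bar> * \<bar>(y - y')$sa\<bar>)"
  proof -
    have "(\<Sum>sa\<in>UNIV. r h (fst sa) (snd sa) * (y - y')$sa) \<le> \<bar>\<Sum>sa\<in>UNIV. r h (fst sa) (snd sa) * (y - y')$sa\<bar>" by (rule abs_ge_self)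
    also have "\<dots> \<le> (\<Sum>sa\<in>UNIV. \<bar>r h (fst sa) (snd sa) * (y - y')$sa\<bar>)" by (rule sum_abs)
    finally show ?thesis by (simp add: abs_mult)
  qed
  also have "\<dots> \<le> (\<Sum>sa\<in>(UNIV::('s\<times>bool) set). R * infnorm (y - y'))"
    by (intro sum_mono mult_mono component_le_infnorm_cart assms) (use assms[of undefined undefined] in auto)
  also have "\<dots> = R * (2 * real CARD('s)) * infnorm (y - y')" by simp
  finally show ?thesis .
qed

lemma infnorm_le_sqrt_infnorm: "infnorm (a - b) \<le> norm (a - (b::real^'n::finite))"
  by (rule infnorm_le_norm)

lemma next_diff:
  "infnorm (next_state N P h y z - next_state N P h y' z) \<le> sqrt (real CARD('s)) * infnorm (phi P h y - phi P h y')"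
  for P :: "nat \<Rightarrow> 's::finite \<Rightarrow> bool \<Rightarrow> 's \<Rightarrow> real"
proof -
  have "infnorm (next_state N P h y z - next_state N P h y' z) \<le> norm (next_state N P h y z - next_state N P h y' z)"
    by (rule infnorm_le_norm)
  also have "\<dots> \<le> norm ((phi P h y + (1 / sqrt (real N)) *\<^sub>R z) - (phi P h y' + (1 / sqrt (real N)) *\<^sub>R z))"
    using closest_point_lipschitz[OF Delta_convex Delta_closed Delta_ne] unfolding next_state_def dist_norm by blast
  also have "\<dots> = norm (phi P h y - phi P h y')" by simp
  also have "\<dots> \<le> sqrt (real DIM(real^'s)) * infnorm (phi P h y - phi P h y')" by (rule norm_le_infnorm)
  finally show ?thesis by simp
qed

lemma next_center:
  fixes P :: "nat \<Rightarrow> 's::finite \<Rightarrow> bool \<Rightarrow> 's \<Rightarrow> real"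
  assumes "xc \<in> Delta"
  shows "infnorm (next_state N P h y z - xc) \<le> sqrt (real CARD('s)) * (infnorm (phi P h y - xc) + infnorm z / sqrt (real N))"
proof -
  have cp: "closest_point Delta xc = xc" by (rule closest_point_self[OF assms])
  have "infnorm (next_state N P h y z - xc) \<le> norm (next_state N P h y z - closest_point Delta xc)"
    using infnorm_le_norm cp by metis
  also have "\<dots> \<le> norm ((phi P h y + (1 / sqrt (real N)) *\<^sub>R z) - xc)"
    using closest_point_lipschitz[OF Delta_convex Delta_closed Delta_ne] unfolding next_state_def dist_norm by blast
  also have "\<dots> \<le> sqrt (real DIM(real^'s)) * infnorm ((phi P h y - xc) + (1 / sqrt (real N)) *\<^sub>R z)"
    using norm_le_infnorm[of "(phi P h y - xc) + (1 / sqrt (real N)) *\<^sub>R z"] by (simp add: algebra_simps)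
  also have "\<dots> \<le> sqrt (real DIM(real^'s)) * (infnorm (phi P h y - xc) + infnorm z / sqrt (real N))"
  proof (rule mult_left_mono)
    have "infnorm ((phi P h y - xc) + (1 / sqrt (real N)) *\<^sub>R z) \<le> infnorm (phi P h y - xc) + infnorm ((1 / sqrt (real N)) *\<^sub>R z)"
      by (rule infnorm_triangle)
    also have "infnorm ((1 / sqrt (real N)) *\<^sub>R z) = infnorm z / sqrt (real N)"
      by (simp add: infnorm_mul)
    finally show "infnorm ((phi P h y - xc) + (1 / sqrt (real N)) *\<^sub>R z) \<le> infnorm (phi P h y - xc) + infnorm z / sqrt (real N)" .
  qed simp
  finally show ?thesis by simp
qed



lemma zaux_nonneg: "0 \<le> k \<Longrightarrow> (\<And>n. 0 \<le> L n) \<Longrightarrow> 0 \<le> S \<Longrightarrow> 0 \<le> zaux S k L n"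
  by (induction n) auto

lemma uaux_nonneg: "0 \<le> c \<Longrightarrow> (\<And>n. 0 \<le> L n) \<Longrightarrow> 0 \<le> S \<Longrightarrow> 0 \<le> uaux c S L H n"
  by (induction n) auto

lemma kappa_pos: "0 < kappa H \<alpha> P xini r ys"
  unfolding kappa_def by (simp add: max_def)

lemma zfun_nonneg: "0 \<le> zfun H \<alpha> P xini r ys h"
  unfolding zfun_def using kappa_pos[of H \<alpha> P xini r ys]
  by (intro zaux_nonneg lipconst_prop) auto

lemma zfun_Suc: "1 \<le> h \<Longrightarrow> zfun H \<alpha> P xini r ys (Suc h) =
   sqrt (real CARD('s)) * (kappa H \<alpha> P xini r ys * lipconst P h * zfun H \<alpha> P xini r ys h + 1)"
  for P :: "nat \<Rightarrow> 's::finite \<Rightarrow> bool \<Rightarrow> 's \<Rightarrow> real"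
  unfolding zfun_def by (cases h) auto

lemma ufun_nonneg:
  fixes P :: "nat \<Rightarrow> 's::finite \<Rightarrow> bool \<Rightarrow> 's \<Rightarrow> real"
  assumes "0 \<le> rmax H r" shows "0 \<le> ufun H P r h"
  unfolding ufun_def using assms by (intro uaux_nonneg lipconst_prop) auto

lemma ufun_H:
  fixes P :: "nat \<Rightarrow> 's::finite \<Rightarrow> bool \<Rightarrow> 's \<Rightarrow> real"
  shows "ufun H P r H = 2 * rmax H r * real CARD('s) * (real CARD('s) + 1)"
  unfolding ufun_def by simp

lemma ufun_step:
  fixes P :: "nat \<Rightarrow> 's::finite \<Rightarrow> bool \<Rightarrow> 's \<Rightarrow> real"
  assumes "h < H"
  shows "ufun H P r h = 2 * rmax H r * real CARD('s) * (real CARD('s) + 1)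
     + sqrt (real CARD('s)) * ufun H P r (Suc h) * lipconst P h * (real CARD('s) + 1)"
proof -
  have e: "H - h = Suc (H - Suc h)" using assms by simp
  have e2: "H - Suc (H - Suc h) = h" using assms by simp
  show ?thesis unfolding ufun_def e by (simp only: uaux.simps e2)
qed

lemma powr_bound:
  assumes "1 \<le> (N::nat)"
  shows "exp (- (2 * ln (real N))\<^sup>2) \<le> real N powr (- ln (real N))"
proof -
  have "real N powr (- ln (real N)) = exp (- (ln (real N))\<^sup>2)"
    using assms by (simp add: powr_def power2_eq_square)
  moreover have "- (2 * ln (real N))\<^sup>2 \<le> - (ln (real N))\<^sup>2"
    by (simp add: power2_eq_square)
  ultimately show ?thesis by simp
qed



lemma Yset_x_Delta: "y \<in> Yset \<alpha> x \<Longrightarrow> x \<in> Delta"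
proof -
  assume y: "y \<in> Yset \<alpha> x"
  note f = Yset_facts[OF y]
  have "0 \<le> x$s" for s using f(1)[of "(s,False)"] f(1)[of "(s,True)"] f(2)[of s] by linarith
  moreover have "(\<Sum>s\<in>UNIV. x$s) = 1"
  proof -
    have "(\<Sum>s\<in>UNIV. x$s) = (\<Sum>sa\<in>UNIV. y$sa)" by (simp add: sum_pair_bool f(2)[symmetric] add.commute)
    also have "\<dots> = 1" using f(4) by (simp add: Delta_def)
    finally show ?thesis .
  qed
  ultimately show ?thesis by (simp add: Delta_def)
qed

lemma Vtil_unfold:
  assumes "h \<in> {1..H}"
  shows "Vtil H N P r ys \<pi> h v = reward r h (\<pi> v h) +
    (\<integral>z. Vaux H N P r ys \<pi> (H - h) (next_state N P h (\<pi> v h) z) \<partial>gauss_cov (Gamma P h (ys h)))"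
proof -
  have e: "Suc H - h = Suc (H - h)" "H - (H - h) = h" using assms by auto
  show ?thesis unfolding Vtil_def e(1) by (simp add: Let_def e(2))
qed

lemma Vtil_Suc: "Vtil H N P r ys \<pi> (Suc h) = Vaux H N P r ys \<pi> (H - h)"
  by (simp add: Vtil_def fun_eq_iff)

lemma meas_next_z[measurable]: "(\<lambda>z. next_state N P h w z) \<in> borel_measurable borel"
  for P :: "nat \<Rightarrow> 'a::finite \<Rightarrow> bool \<Rightarrow> 'a \<Rightarrow> real"
proof -
  have "continuous_on UNIV (\<lambda>z. next_state N P h w z)"
  proof -
    have "continuous_on UNIV (\<lambda>z::real^'a. (w, z))" by (intro continuous_intros)
    from continuous_on_compose2[OF cont_next[of N P h] this] show ?thesis by simp
  qed
  then show ?thesis by (rule borel_measurable_continuous_onI)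
qed

lemma meas_gauss: "measurable (gauss_cov G) M = measurable borel M"
  by (rule measurable_cong_sets) auto



lemma step:
  fixes H :: nat and \<alpha> :: real
    and P :: "nat \<Rightarrow> 's::finite \<Rightarrow> bool \<Rightarrow> 's \<Rightarrow> real"
    and r :: "nat \<Rightarrow> 's \<Rightarrow> bool \<Rightarrow> real"
    and xini :: "real^'s"
    and xs :: "nat \<Rightarrow> real^'s" and ys :: "nat \<Rightarrow> real^('s \<times> bool)"
    and \<pi>0 \<pi> :: "real^'s \<Rightarrow> nat \<Rightarrow> real^('s \<times> bool)"
  assumes H1: "1 \<le> H"
    and P_nonneg: "\<And>h s a s'. h \<in> {1..H} \<Longrightarrow> 0 \<le> P h s a s'"
    and P_sum: "\<And>h s a. h \<in> {1..H} \<Longrightarrow> (\<Sum>s'\<in>UNIV. P h s a s') = 1"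
    and r_nonneg: "\<And>h s a. h \<in> {1..H} \<Longrightarrow> 0 \<le> r h s a"
    and LP_feas: "lp_feasible H \<alpha> P xini xs ys"
    and N: "1 \<le> N"
    and opt: "locally_SP_optimal H \<alpha> P r xini xs ys \<pi>0 N \<pi>"
    and h: "h \<in> {1..H}"
    and x: "x \<in> Delta" "infnorm (x - xs h) \<le> zfun H \<alpha> P xini r ys h * deltaN N"
    and x': "x' \<in> Delta" "infnorm (x' - xs h) \<le> zfun H \<alpha> P xini r ys h * deltaN N"
    and C0: "0 \<le> C"
    and IH: "h < H \<Longrightarrow> \<forall>v v'. v \<in> Delta \<and> infnorm (v - xs (Suc h)) \<le> zfun H \<alpha> P xini r ys (Suc h) * deltaN N \<and>
                 v' \<in> Delta \<and> infnorm (v' - xs (Suc h)) \<le> zfun H \<alpha> P xini r ys (Suc h) * deltaN N \<longrightarrow>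
              Vtil H N P r ys \<pi> (Suc h) v - Vtil H N P r ys \<pi> (Suc h) v'
                \<le> ufun H P r (Suc h) * infnorm (v - v') + C * real N powr (- ln (real N))"
  shows "Vtil H N P r ys \<pi> h x - Vtil H N P r ys \<pi> h x'
     \<le> ufun H P r h * infnorm (x - x') + (C + real H * rmax H r * sqrt 2 ^ CARD('s)) * real N powr (- ln (real N))"
proof -
  define S where "S = real CARD('s)"
  define \<kappa> where "\<kappa> = kappa H \<alpha> P xini r ys"
  define zf where "zf = zfun H \<alpha> P xini r ys"
  define \<delta> where "\<delta> = deltaN N"
  define \<rho> where "\<rho> = \<kappa> * zf h * \<delta>"
  define L where "L = lipconst P h"
  define R where "R = rmax H r"
  define K where "K = sqrt 2 ^ CARD('s)"
  define p where "p = real N powr (- ln (real N))"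
  define d where "d = infnorm (x - x')"
  define k where "k = H - h"
  define V where "V = Vaux H N P r ys \<pi> k"
  define \<mu> where "\<mu> = gauss_cov (Gamma P h (ys h))"
  interpret mu: prob_space \<mu> unfolding \<mu>_def by (rule gauss_cov_prob)
  have S0: "0 \<le> S" by (simp add: S_def)
  have \<kappa>0: "0 \<le> \<kappa>" unfolding \<kappa>_def by (rule less_imp_le[OF kappa_pos])
  have zf0: "\<And>j. 0 \<le> zf j" by (simp add: zf_def zfun_nonneg)
  have \<delta>0: "0 \<le> \<delta>" using N by (simp add: \<delta>_def deltaN_def)
  have L0: "0 \<le> L" by (simp add: L_def lipconst_prop)
  have R0: "0 \<le> R" unfolding R_def by (rule rmax_nonneg[OF H1 r_nonneg])
  have K0: "0 \<le> K" by (simp add: K_def)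
  have p0: "0 \<le> p" by (simp add: p_def)
  have d0: "0 \<le> d" by (simp add: d_def infnorm_pos_le)
  have rR: "\<And>h s a. h \<in> {1..H} \<Longrightarrow> r h s a \<le> R" unfolding R_def by (rule rmax_ge)
  have feas: "\<And>j. j \<in> {1..H} \<Longrightarrow> ys j \<in> Yset \<alpha> (xs j) \<and> xs (Suc j) = phi P j (ys j)"
    using LP_feas by (auto simp: lp_feasible_def)
  have ysD: "ys h \<in> Delta" using feas[OF h] Yset_facts(4) by blast
  have \<pi>Pi: "\<pi> \<in> Pi_loc H \<alpha> \<kappa> zf \<delta> xs ys \<pi>0"
    using opt by (simp add: locally_SP_optimal_def Pi_N_def \<kappa>_def zf_def \<delta>_def)
  have pv: "policy_valid H \<alpha> \<pi>" using \<pi>Pi by (simp add: Pi_loc_def)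
  have \<pi>Y: "\<And>j v. j \<in> {1..H} \<Longrightarrow> v \<in> Delta \<Longrightarrow> \<pi> v j \<in> Yset \<alpha> v" using pv by (simp add: policy_valid_def)
  have \<pi>m: "\<And>j. (\<lambda>v. \<pi> v j) \<in> borel_measurable borel" using pv by (simp add: policy_valid_def)
  have \<pi>D: "\<And>j v. j \<in> {1..H} \<Longrightarrow> v \<in> Delta \<Longrightarrow> \<pi> v j \<in> Delta" using \<pi>Y Yset_facts(4) by blast
  have \<pi>loc: "\<And>j v. j \<in> {1..H} \<Longrightarrow> v \<in> Delta \<Longrightarrow>
      (infnorm (v - xs j) \<le> zf j * \<delta> \<longrightarrow> infnorm (\<pi> v j - ys j) \<le> \<kappa> * zf j * \<delta>) \<and>
      (\<not> infnorm (v - xs j) \<le> zf j * \<delta> \<longrightarrow> \<pi> v j = \<pi>0 v j)"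
    using \<pi>Pi by (simp add: Pi_loc_def)
  define y where "y = \<pi> x h"
  define y0 where "y0 = \<pi> x' h"
  have yY: "y \<in> Yset \<alpha> x" and yb: "infnorm (y - ys h) \<le> \<rho>"
    using \<pi>Y[OF h x(1)] \<pi>loc[OF h x(1)] x(2) by (auto simp: y_def \<rho>_def zf_def \<delta>_def)
  have y0Y: "y0 \<in> Yset \<alpha> x'" and y0b: "infnorm (y0 - ys h) \<le> \<rho>"
    using \<pi>Y[OF h x'(1)] \<pi>loc[OF h x'(1)] x'(2) by (auto simp: y0_def \<rho>_def zf_def \<delta>_def)
  obtain y' where y'Y: "y' \<in> Yset \<alpha> x'" and y'b: "infnorm (y' - ys h) \<le> \<rho>"
    and y'd: "infnorm (y' - y) \<le> (S + 1) * d"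
    using y_construct[OF x(1) x'(1) yY yb y0Y y0b] by (auto simp: S_def d_def)
  have yD: "y \<in> Delta" and y'D: "y' \<in> Delta" using yY y'Y Yset_facts(4) by blast+
  define \<pi>' where "\<pi>' = (\<lambda>v j. if v = x' \<and> j = h then y' else \<pi> v j)"
  have \<pi>'Pi: "\<pi>' \<in> Pi_N H \<alpha> P r xini xs ys \<pi>0 N"
  proof -
    have "policy_valid H \<alpha> \<pi>'"
    proof -
      have "\<forall>j\<in>{1..H}. \<forall>v\<in>Delta. \<pi>' v j \<in> Yset \<alpha> v" using \<pi>Y y'Y by (auto simp: \<pi>'_def)
      moreover have "(\<lambda>v. \<pi>' v j) \<in> borel_measurable borel" for j
      proof (cases "j = h")
        case True
        note [measurable] = \<pi>m
        show ?thesis unfolding \<pi>'_def True by measurable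
      next
        case False then show ?thesis using \<pi>m[of j] by (simp add: \<pi>'_def)
      qed
      ultimately show ?thesis by (simp add: policy_valid_def)
    qed
    moreover have "\<forall>j\<in>{1..H}. \<forall>v\<in>Delta.
        (infnorm (v - xs j) \<le> zf j * \<delta> \<longrightarrow> infnorm (\<pi>' v j - ys j) \<le> \<kappa> * zf j * \<delta>) \<and>
        (\<not> infnorm (v - xs j) \<le> zf j * \<delta> \<longrightarrow> \<pi>' v j = \<pi>0 v j)"
      using \<pi>loc y'b x'(2) by (auto simp: \<pi>'_def \<rho>_def zf_def \<delta>_def)
    ultimately show ?thesis
      by (simp add: Pi_N_def Pi_loc_def \<kappa>_def zf_def \<delta>_def)
  qed
  have optx': "Vtil H N P r ys \<pi>' h x' \<le> Vtil H N P r ys \<pi> h x'"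
    using opt \<pi>'Pi h x'(1) by (auto simp: locally_SP_optimal_def)
  have Vcong: "Vaux H N P r ys \<pi>' k = V"
    unfolding V_def by (rule Vaux_cong) (auto simp: \<pi>'_def k_def)
  define f where "f w z = V (next_state N P h w z)" for w z
  have Vx: "Vtil H N P r ys \<pi> h x = reward r h y + (\<integral>z. f y z \<partial>\<mu>)"
    by (simp add: Vtil_unfold[OF h] y_def f_def V_def k_def \<mu>_def)
  have Vx'': "Vtil H N P r ys \<pi>' h x' = reward r h y' + (\<integral>z. f y' z \<partial>\<mu>)"
    using Vtil_unfold[OF h, of N P r ys \<pi>' x'] Vcong
    by (simp add: \<pi>'_def f_def k_def \<mu>_def)
  have rew: "reward r h y - reward r h y' \<le> 2 * R * S * (S + 1) * d"
  proof -
    have "reward r h y - reward r h y' \<le> R * (2 * S) * infnorm (y - y')"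
      unfolding S_def by (rule reward_diff) (use r_nonneg[OF h] rR[OF h] in auto)
    also have "\<dots> \<le> R * (2 * S) * ((S + 1) * d)"
      by (rule mult_left_mono) (use y'd R0 S0 in \<open>auto simp: infnorm_sub\<close>)
    finally show ?thesis by (simp add: algebra_simps)
  qed
  have Vb: "\<And>v. v \<in> Delta \<Longrightarrow> 0 \<le> V v \<and> V v \<le> real H * R"
  proof -
    fix v :: "real^'s" assume v: "v \<in> Delta"
    have "0 \<le> V v \<and> V v \<le> real k * R"
      unfolding V_def by (rule Vaux_bounds[OF \<pi>D r_nonneg rR R0]) (use v in \<open>auto simp: k_def\<close>)
    moreover have "real k * R \<le> real H * R" by (rule mult_right_mono) (use R0 in \<open>auto simp: k_def\<close>)
    ultimately show "0 \<le> V v \<and> V v \<le> real H * R" by linarith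
  qed
  have fm: "f w \<in> borel_measurable \<mu>" for w
  proof -
    note [measurable] = Vaux_meas[OF \<pi>m]
    show ?thesis unfolding f_def V_def \<mu>_def meas_gauss by measurable
  qed
  have fi: "integrable \<mu> (f w)" for w
  proof (rule mu.integrable_const_bound[where B="real H * R"])
    show "AE z in \<mu>. norm (f w z) \<le> real H * R"
      using Vb[OF next_state_Delta] by (auto simp: f_def)
  qed (rule fm)
  define T where "T = {z::real^'s. 2 * ln (real N) < infnorm z}"
  have Tm: "T \<in> sets \<mu>" unfolding T_def \<mu>_def by simp
  define A where "A = (if h < H then ufun H P r (Suc h) * sqrt S * L * (S + 1) * d + C * p else 0)"
  have A0: "0 \<le> A" using ufun_nonneg[OF R0[unfolded R_def]] L0 S0 d0 C0 p0 by (simp add: A_def)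
  have pw: "f y z - f y' z \<le> A + real H * R * indicator T z" for z
  proof (cases "z \<in> T")
    case True
    have "f y z - f y' z \<le> real H * R"
      using Vb[OF next_state_Delta[of N P h y z]] Vb[OF next_state_Delta[of N P h y' z]] by (simp add: f_def)
    then show ?thesis using True A0 by simp
  next
    case False
    show ?thesis
    proof (cases "h < H")
      case False
      then have "k = 0" using h by (simp add: k_def)
      then show ?thesis using A0 R0 by (simp add: f_def V_def)
    next
      case hH: True
      have zin: "infnorm z \<le> 2 * ln (real N)" using False by (simp add: T_def)
      have xsD: "xs (Suc h) \<in> Delta"
        using feas[of "Suc h"] hH h Yset_x_Delta by auto
      have xsS: "xs (Suc h) = phi P h (ys h)" using feas[OF h] by simp
      have zS: "zf (Suc h) = sqrt S * (\<kappa> * L * zf h + 1)"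
        unfolding zf_def S_def \<kappa>_def L_def by (rule zfun_Suc) (use h in auto)
      have ball: "infnorm (next_state N P h w z - xs (Suc h)) \<le> zf (Suc h) * \<delta>"
        if w: "w \<in> Delta" "infnorm (w - ys h) \<le> \<rho>" for w
      proof -
        have "infnorm (next_state N P h w z - xs (Suc h))
            \<le> sqrt S * (infnorm (phi P h w - xs (Suc h)) + infnorm z / sqrt (real N))"
          unfolding S_def by (rule next_center[OF xsD])
        also have "\<dots> \<le> sqrt S * (L * \<rho> + \<delta>)"
        proof (rule mult_left_mono)
          have "infnorm (phi P h w - xs (Suc h)) \<le> L * infnorm (w - ys h)"
            unfolding xsS L_def by (rule lipconst_prop(2)[OF w(1) ysD])
          also have "\<dots> \<le> L * \<rho>" by (rule mult_left_mono[OF w(2) L0])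
          finally have a: "infnorm (phi P h w - xs (Suc h)) \<le> L * \<rho>" .
          have "infnorm z / sqrt (real N) \<le> 2 * ln (real N) / sqrt (real N)"
            by (rule divide_right_mono[OF zin]) simp
          then have b: "infnorm z / sqrt (real N) \<le> \<delta>" by (simp add: \<delta>_def deltaN_def)
          show "infnorm (phi P h w - xs (Suc h)) + infnorm z / sqrt (real N) \<le> L * \<rho> + \<delta>"
            using a b by linarith
        qed (simp add: S0)
        also have "\<dots> = zf (Suc h) * \<delta>" by (simp add: zS \<rho>_def algebra_simps)
        finally show ?thesis .
      qed
      have IH': "V v - V v' \<le> ufun H P r (Suc h) * infnorm (v - v') + C * p"
        if "v \<in> Delta" "infnorm (v - xs (Suc h)) \<le> zf (Suc h) * \<delta>"
           "v' \<in> Delta" "infnorm (v' - xs (Suc h)) \<le> zf (Suc h) * \<delta>" for v v'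
        using IH[OF hH] that by (simp add: Vtil_Suc V_def k_def zf_def \<delta>_def p_def)
      have "f y z - f y' z \<le> ufun H P r (Suc h) * infnorm (next_state N P h y z - next_state N P h y' z) + C * p"
        unfolding f_def
        by (rule IH'[OF next_state_Delta ball[OF yD yb] next_state_Delta ball[OF y'D y'b]])
      also have "\<dots> \<le> ufun H P r (Suc h) * (sqrt S * L * (S + 1) * d) + C * p"
      proof -
        have "infnorm (next_state N P h y z - next_state N P h y' z) \<le> sqrt S * infnorm (phi P h y - phi P h y')"
          unfolding S_def by (rule next_diff)
        also have "\<dots> \<le> sqrt S * (L * infnorm (y - y'))"
          by (rule mult_left_mono) (use lipconst_prop(2)[OF yD y'D] in \<open>auto simp: L_def S0\<close>)
        also have "\<dots> \<le> sqrt S * (L * ((S + 1) * d))"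
          by (intro mult_left_mono) (use y'd L0 S0 in \<open>auto simp: infnorm_sub\<close>)
        finally have "infnorm (next_state N P h y z - next_state N P h y' z) \<le> sqrt S * L * (S + 1) * d"
          by (simp add: mult_ac)
        then show ?thesis
          using ufun_nonneg[OF R0[unfolded R_def], of P "Suc h"]
          by (intro add_right_mono mult_left_mono) auto
      qed
      also have "\<dots> = A" using hH by (simp add: A_def mult_ac)
      finally show ?thesis using R0 \<open>z \<notin> T\<close> by (simp add: indicator_def)
    qed
  qed
  have int_le: "(\<integral>z. f y z \<partial>\<mu>) - (\<integral>z. f y' z \<partial>\<mu>) \<le> A + real H * R * measure \<mu> T"
  proof -
    have "(\<integral>z. f y z \<partial>\<mu>) - (\<integral>z. f y' z \<partial>\<mu>) = (\<integral>z. f y z - f y' z \<partial>\<mu>)"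
      by (rule Bochner_Integration.integral_diff[OF fi fi, symmetric])
    also have "\<dots> \<le> (\<integral>z. A + real H * R * indicator T z \<partial>\<mu>)"
    proof (rule integral_mono)
      show "integrable \<mu> (\<lambda>z. A + real H * R * indicator T z)"
        by (intro Bochner_Integration.integrable_add integrable_mult_right integrable_real_indicator Tm)
           (auto simp: mu.emeasure_finite top.not_eq_extremum[symmetric])
    qed (use fi pw in auto)
    also have "\<dots> = A + real H * R * measure \<mu> T"
    proof -
      have ii: "integrable \<mu> (\<lambda>z. real H * R * indicator T z)"
        by (intro integrable_mult_right integrable_real_indicator Tm)
           (auto simp: mu.emeasure_finite top.not_eq_extremum[symmetric])
      have "(\<integral>z. A + real H * R * indicator T z \<partial>\<mu>) = (\<integral>z. A \<partial>\<mu>) + (\<integral>z. real H * R * indicator T z \<partial>\<mu>)"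
        by (rule Bochner_Integration.integral_add[OF mu.integrable_const ii])
      also have "(\<integral>z. real H * R * indicator T z \<partial>\<mu>) = real H * R * measure \<mu> T"
        using Tm by (simp add: Int_absorb2 sets.sets_into_space)
      finally show ?thesis by (simp add: mu.prob_space)
    qed
    finally show ?thesis .
  qed
  have Tb: "measure \<mu> T \<le> K * p"
  proof -
    have "measure \<mu> T \<le> sqrt 2 ^ CARD('s) * exp (- (2 * ln (real N))\<^sup>2)"
      unfolding \<mu>_def T_def
      by (rule gauss_cov_tail[OF ysD]) (use P_nonneg[OF h] P_sum[OF h] N in auto)
    also have "\<dots> \<le> K * p" unfolding K_def p_def by (rule mult_left_mono[OF powr_bound[OF N]]) simp
    finally show ?thesis .
  qed
  have "Vtil H N P r ys \<pi> h x - Vtil H N P r ys \<pi> h x' \<le> Vtil H N P r ys \<pi> h x - Vtil H N P r ys \<pi>' h x'"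
    using optx' by simp
  also have "\<dots> = (reward r h y - reward r h y') + ((\<integral>z. f y z \<partial>\<mu>) - (\<integral>z. f y' z \<partial>\<mu>))"
    by (simp add: Vx Vx'')
  also have "\<dots> \<le> 2 * R * S * (S + 1) * d + (A + real H * R * (K * p))"
    using rew int_le mult_left_mono[OF Tb, of "real H * R"] R0 by (simp add: add_mono)
  also have "\<dots> \<le> ufun H P r h * d + (C + real H * R * K) * p"
  proof (cases "h < H")
    case True
    have "ufun H P r h = 2 * R * S * (S + 1) + sqrt S * ufun H P r (Suc h) * L * (S + 1)"
      unfolding R_def S_def L_def by (rule ufun_step[OF True])
    then show ?thesis using True by (simp add: A_def algebra_simps)
  next
    case False
    then have "h = H" using h by simp
    then show ?thesis using False C0 p0 by (simp add: A_def ufun_H R_def S_def algebra_simps)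
  qed
  finally show ?thesis by (simp add: d_def R_def K_def p_def)
qed



theorem lemma5:
  fixes H :: nat and \<alpha> :: real
    and P :: "nat \<Rightarrow> 's::finite \<Rightarrow> bool \<Rightarrow> 's \<Rightarrow> real"
    and r :: "nat \<Rightarrow> 's \<Rightarrow> bool \<Rightarrow> real"
    and xini :: "real^'s"
    and xs :: "nat \<Rightarrow> real^'s" and ys :: "nat \<Rightarrow> real^('s \<times> bool)"
    and \<pi>0 :: "real^'s \<Rightarrow> nat \<Rightarrow> real^('s \<times> bool)"
  assumes H: "1 \<le> H"
    and alpha: "0 < \<alpha>" "\<alpha> < 1"
    and P_nonneg: "\<And>h s a s'. h \<in> {1..H} \<Longrightarrow> 0 \<le> P h s a s'"
    and P_sum: "\<And>h s a. h \<in> {1..H} \<Longrightarrow> (\<Sum>s'\<in>UNIV. P h s a s') = 1"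
    and r_nonneg: "\<And>h s a. h \<in> {1..H} \<Longrightarrow> 0 \<le> r h s a"
    and xini: "xini \<in> Delta"
    and LP_feas: "lp_feasible H \<alpha> P xini xs ys"
    and LP_supp: "\<And>h. h \<notin> {1..H} \<Longrightarrow> ys h = 0"
    and LP_opt: "\<And>y. y \<in> lp_U H \<alpha> P xini \<Longrightarrow> lp_value H r y \<le> lp_value H r ys"
    and sigma_pos: "0 < sigma H \<alpha> P xini r ys"
    and pi0: "policy_valid H \<alpha> \<pi>0"
  shows "\<exists>C N0. \<forall>N::nat. N \<ge> N0 \<longrightarrow> (\<exists>m::nat. \<alpha> * real N = real m) \<longrightarrow>
           (\<forall>\<pi>. locally_SP_optimal H \<alpha> P r xini xs ys \<pi>0 N \<pi> \<longrightarrow>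
             (\<forall>h\<in>{1..H}. \<forall>x x'.
                x \<in> Delta \<and> infnorm (x - xs h) \<le> zfun H \<alpha> P xini r ys h * deltaN N \<and>
                x' \<in> Delta \<and> infnorm (x' - xs h) \<le> zfun H \<alpha> P xini r ys h * deltaN N \<longrightarrow>
                \<bar>Vtil H N P r ys \<pi> h x - Vtil H N P r ys \<pi> h x'\<bar>
                  \<le> ufun H P r h * infnorm (x - x') + C * real N powr (- ln (real N))))"

proof -
  define R where "R = rmax H r"
  define B where "B = real H * R * sqrt 2 ^ CARD('s)"
  have R0: "0 \<le> R" unfolding R_def by (rule rmax_nonneg[OF H r_nonneg])
  have B0: "0 \<le> B" using R0 by (simp add: B_def)
  have main: "\<And>N \<pi>. 1 \<le> N \<Longrightarrow> locally_SP_optimal H \<alpha> P r xini xs ys \<pi>0 N \<pi> \<Longrightarrow>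
     \<forall>h. H - h = k \<longrightarrow> h \<in> {1..H} \<longrightarrow> (\<forall>x x'.
        x \<in> Delta \<and> infnorm (x - xs h) \<le> zfun H \<alpha> P xini r ys h * deltaN N \<and>
        x' \<in> Delta \<and> infnorm (x' - xs h) \<le> zfun H \<alpha> P xini r ys h * deltaN N \<longrightarrow>
        Vtil H N P r ys \<pi> h x - Vtil H N P r ys \<pi> h x'
          \<le> ufun H P r h * infnorm (x - x') + real (Suc k) * B * real N powr (- ln (real N)))" for k
  proof (induction k)
    case 0
    show ?case
    proof (intro allI impI)
      fix h x x' assume hk: "H - h = 0" and h: "h \<in> {1..H}"
        and xx: "x \<in> Delta \<and> infnorm (x - xs h) \<le> zfun H \<alpha> P xini r ys h * deltaN N \<and>
        x' \<in> Delta \<and> infnorm (x' - xs h) \<le> zfun H \<alpha> P xini r ys h * deltaN N"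
      have "Vtil H N P r ys \<pi> h x - Vtil H N P r ys \<pi> h x'
          \<le> ufun H P r h * infnorm (x - x') + (0 + real H * rmax H r * sqrt 2 ^ CARD('s)) * real N powr (- ln (real N))"
        by (rule step[OF H P_nonneg P_sum r_nonneg LP_feas 0(1) 0(2) h]) (use xx hk h in auto)
      then show "Vtil H N P r ys \<pi> h x - Vtil H N P r ys \<pi> h x'
          \<le> ufun H P r h * infnorm (x - x') + real (Suc 0) * B * real N powr (- ln (real N))"
        by (simp add: B_def R_def)
    qed
  next
    case (Suc k)
    show ?case
    proof (intro allI impI)
      fix h x x' assume hk: "H - h = Suc k" and h: "h \<in> {1..H}"
        and xx: "x \<in> Delta \<and> infnorm (x - xs h) \<le> zfun H \<alpha> P xini r ys h * deltaN N \<and>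
        x' \<in> Delta \<and> infnorm (x' - xs h) \<le> zfun H \<alpha> P xini r ys h * deltaN N"
      have IH: "\<forall>v v'. v \<in> Delta \<and> infnorm (v - xs (Suc h)) \<le> zfun H \<alpha> P xini r ys (Suc h) * deltaN N \<and>
                 v' \<in> Delta \<and> infnorm (v' - xs (Suc h)) \<le> zfun H \<alpha> P xini r ys (Suc h) * deltaN N \<longrightarrow>
              Vtil H N P r ys \<pi> (Suc h) v - Vtil H N P r ys \<pi> (Suc h) v'
                \<le> ufun H P r (Suc h) * infnorm (v - v') + (real (Suc k) * B) * real N powr (- ln (real N))"
        using Suc.IH[OF Suc.prems] hk h by (auto simp: mult.assoc)
      have "Vtil H N P r ys \<pi> h x - Vtil H N P r ys \<pi> h x'
          \<le> ufun H P r h * infnorm (x - x') + (real (Suc k) * B + real H * rmax H r * sqrt 2 ^ CARD('s)) * real N powr (- ln (real N))"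
        by (rule step[OF H P_nonneg P_sum r_nonneg LP_feas Suc.prems(1) Suc.prems(2) h])
           (use xx B0 IH in auto)
      then show "Vtil H N P r ys \<pi> h x - Vtil H N P r ys \<pi> h x'
          \<le> ufun H P r h * infnorm (x - x') + real (Suc (Suc k)) * B * real N powr (- ln (real N))"
        by (simp add: B_def R_def algebra_simps)
    qed
  qed
  show ?thesis
  proof (rule exI[where x="real H * B"], rule exI[where x=1], intro allI impI ballI)
    fix N :: nat and \<pi> h x x'
    assume N: "1 \<le> N" and "\<exists>m::nat. \<alpha> * real N = real m" and opt: "locally_SP_optimal H \<alpha> P r xini xs ys \<pi>0 N \<pi>" and h: "h \<in> {1..H}"
      and xx: "x \<in> Delta \<and> infnorm (x - xs h) \<le> zfun H \<alpha> P xini r ys h * deltaN N \<and>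
        x' \<in> Delta \<and> infnorm (x' - xs h) \<le> zfun H \<alpha> P xini r ys h * deltaN N"
    have p0: "0 \<le> real N powr (- ln (real N))" by simp
    have kH: "real (Suc (H - h)) * B * real N powr (- ln (real N)) \<le> real H * B * real N powr (- ln (real N))"
      using h B0 p0 by (intro mult_right_mono) auto
    have d1: "Vtil H N P r ys \<pi> h x - Vtil H N P r ys \<pi> h x'
          \<le> ufun H P r h * infnorm (x - x') + real (Suc (H - h)) * B * real N powr (- ln (real N))"
      using main[OF N opt, of "H - h"] h xx by blast
    have d2: "Vtil H N P r ys \<pi> h x' - Vtil H N P r ys \<pi> h x
          \<le> ufun H P r h * infnorm (x' - x) + real (Suc (H - h)) * B * real N powr (- ln (real N))"
      using main[OF N opt, of "H - h"] h xx by blast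
    show "\<bar>Vtil H N P r ys \<pi> h x - Vtil H N P r ys \<pi> h x'\<bar>
          \<le> ufun H P r h * infnorm (x - x') + (real H * B) * real N powr (- ln (real N))"
      using d1 d2 kH by (simp add: infnorm_sub abs_le_iff mult.assoc)
  qed
qed

end
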